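(* For every simplicial set $X$, the canonical simplicial map $\mathrm{ESd}\,X\to\mathrm{ESd}'X$ is inner anodyne.
   Context: Work classically. $\Delta$ is the simplex category of finite ordinals $[n]$, $n\ge0$. $\mathrm{ESd}\colon\mathrm{sSet}\to\mathrm{sSet}$ is precomposition with the functor $\Delta\to\Delta$, $[n]\mapsto[n]\star[n]=[2n+1]$, $\alpha\mapsto\alpha\star\alpha$; so $(\mathrm{ESd}\,X)_n=X_{2n+1}$. $\mathrm{ESd}'\colon\mathrm{sSet}\to\mathrm{sSet}$ is the left Kan extension along the Yoneda embedding $\Delta\to\mathrm{sSet}$ of $[n]\mapsto N(\mathrm{Fun}([1],[n]))$, the nerve of the poset of pairs $(a\le b)$ in $[n]$ with the product order. The canonical map is the unique colimit-compatible natural transformation which on $X=\Delta^n$ sends a $k$-simplex $f\colon[2k+1]\to[n]$ of $\mathrm{ESd}\,\Delta^n$ to the $k$-simplex $i\mapsto(f(i),f(k+1+i))$ of $N(\mathrm{Fun}([1],[n]))$ (natural in $[n]$). A map of simplicial sets is inner anodyne if it has the left lifting property against all inner fibrations (maps with the right lifting property against the inner horn inclusions $\Lambda^n_k\hookrightarrow\Delta^n$, $0<k<n$). *)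

theory Defs
  imports Main
begin

text \<open>A morphism [n] -> [m] of the simplex category is represented extensionally as a
monotone function nat => nat mapping {0..n} into {0..m} and sending every i > n to 0.\<close>

definition mor :: "nat \<Rightarrow> nat \<Rightarrow> (nat \<Rightarrow> nat) \<Rightarrow> bool" where
  "mor n m \<alpha> \<longleftrightarrow> (\<forall>i\<le>n. \<alpha> i \<le> m) \<and> (\<forall>i j. i \<le> j \<and> j \<le> n \<longrightarrow> \<alpha> i \<le> \<alpha> j)
     \<and> (\<forall>i. n < i \<longrightarrow> \<alpha> i = 0)"

definition idm :: "nat \<Rightarrow> nat \<Rightarrow> nat" where
  "idm n = (\<lambda>i. if i \<le> n then i else 0)"

definition cmp :: "nat \<Rightarrow> (nat \<Rightarrow> nat) \<Rightarrow> (nat \<Rightarrow> nat) \<Rightarrow> nat \<Rightarrow> nat" where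
  "cmp n \<beta> \<alpha> = (\<lambda>i. if i \<le> n then \<beta> (\<alpha> i) else 0)"

text \<open>sc X n is the set of n-simplices; for alpha : [n] -> [m] and x an m-simplex,
sm X n m alpha x is the n-simplex X(alpha)(x).\<close>

record 'a sset =
  sc :: "nat \<Rightarrow> 'a set"
  sm :: "nat \<Rightarrow> nat \<Rightarrow> (nat \<Rightarrow> nat) \<Rightarrow> 'a \<Rightarrow> 'a"

definition sset :: "'a sset \<Rightarrow> bool" where
  "sset X \<longleftrightarrow>
     (\<forall>n m \<alpha> x. mor n m \<alpha> \<and> x \<in> sc X m \<longrightarrow> sm X n m \<alpha> x \<in> sc X n) \<and>
     (\<forall>n x. x \<in> sc X n \<longrightarrow> sm X n n (idm n) x = x) \<and>
     (\<forall>n m p \<alpha> \<beta> x. mor n m \<alpha> \<and> mor m p \<beta> \<and> x \<in> sc X p \<longrightarrow>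
        sm X n m \<alpha> (sm X m p \<beta> x) = sm X n p (cmp n \<beta> \<alpha>) x)"

definition sset_map :: "'a sset \<Rightarrow> 'b sset \<Rightarrow> (nat \<Rightarrow> 'a \<Rightarrow> 'b) \<Rightarrow> bool" where
  "sset_map X Y f \<longleftrightarrow>
     (\<forall>n x. x \<in> sc X n \<longrightarrow> f n x \<in> sc Y n) \<and>
     (\<forall>n m \<alpha> x. mor n m \<alpha> \<and> x \<in> sc X m \<longrightarrow> f n (sm X n m \<alpha> x) = sm Y n m \<alpha> (f m x))"

definition simplex :: "nat \<Rightarrow> (nat \<Rightarrow> nat) sset" where
  "simplex n = \<lparr> sc = (\<lambda>j. {\<alpha>. mor j n \<alpha>}), sm = (\<lambda>j k \<beta> \<alpha>. cmp j \<alpha> \<beta>) \<rparr>"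

definition horn :: "nat \<Rightarrow> nat \<Rightarrow> (nat \<Rightarrow> nat) sset" where
  "horn n k = \<lparr> sc = (\<lambda>j. {\<alpha>. mor j n \<alpha> \<and> (\<exists>i\<le>n. i \<noteq> k \<and> i \<notin> \<alpha> ` {0..j})}),
                sm = (\<lambda>j l \<beta> \<alpha>. cmp j \<alpha> \<beta>) \<rparr>"

text \<open>i : A -> X has the left lifting property against p : E -> B
(all maps are compared on simplices only).\<close>
definition llp :: "'a sset \<Rightarrow> 'x sset \<Rightarrow> (nat \<Rightarrow> 'a \<Rightarrow> 'x) \<Rightarrow>
                   'e sset \<Rightarrow> 'b sset \<Rightarrow> (nat \<Rightarrow> 'e \<Rightarrow> 'b) \<Rightarrow> bool" where
  "llp A X i E B p \<longleftrightarrow>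
     (\<forall>u v. sset_map A E u \<and> sset_map X B v \<and>
            (\<forall>n a. a \<in> sc A n \<longrightarrow> p n (u n a) = v n (i n a)) \<longrightarrow>
        (\<exists>w. sset_map X E w \<and>
             (\<forall>n a. a \<in> sc A n \<longrightarrow> w n (i n a) = u n a) \<and>
             (\<forall>n x. x \<in> sc X n \<longrightarrow> p n (w n x) = v n x)))"

text \<open>The horn inclusion Lambda^n_k -> Delta^n is the identity on simplices.\<close>
definition inner_fibration :: "'e sset \<Rightarrow> 'b sset \<Rightarrow> (nat \<Rightarrow> 'e \<Rightarrow> 'b) \<Rightarrow> bool" where
  "inner_fibration E B p \<longleftrightarrow> sset E \<and> sset B \<and> sset_map E B p \<and>
     (\<forall>n k. 0 < k \<and> k < n \<longrightarrow> llp (horn n k) (simplex n) (\<lambda>j \<alpha>. \<alpha>) E B p)"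

text \<open>alpha * alpha : [2n+1] -> [2m+1] for alpha : [n] -> [m]\<close>
definition join_self :: "nat \<Rightarrow> nat \<Rightarrow> (nat \<Rightarrow> nat) \<Rightarrow> nat \<Rightarrow> nat" where
  "join_self n m \<alpha> = (\<lambda>i. if i \<le> n then \<alpha> i
                          else if i \<le> 2*n+1 then m + 1 + \<alpha> (i - (n+1)) else 0)"

definition ESd :: "'a sset \<Rightarrow> 'a sset" where
  "ESd X = \<lparr> sc = (\<lambda>n. sc X (2*n+1)),
             sm = (\<lambda>n m \<alpha> x. sm X (2*n+1) (2*m+1) (join_self n m \<alpha>) x) \<rparr>"

section \<open>ESd' as the left Kan extension (coend formula)\<close>

text \<open>k-simplices of N(Fun([1],[m])): chains of pairs (a_i <= b_i), i = 0..k, monotone in the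
product order; extensional (value (0,0) beyond k).\<close>
definition nsimp :: "nat \<Rightarrow> nat \<Rightarrow> (nat \<Rightarrow> nat \<times> nat) \<Rightarrow> bool" where
  "nsimp k m \<sigma> \<longleftrightarrow> (\<forall>i\<le>k. fst (\<sigma> i) \<le> snd (\<sigma> i) \<and> snd (\<sigma> i) \<le> m) \<and>
     (\<forall>i j. i \<le> j \<and> j \<le> k \<longrightarrow> fst (\<sigma> i) \<le> fst (\<sigma> j) \<and> snd (\<sigma> i) \<le> snd (\<sigma> j)) \<and>
     (\<forall>i. k < i \<longrightarrow> \<sigma> i = (0, 0))"

text \<open>covariant action of alpha : [m] -> [m'] on N(Fun([1],[m]))_k\<close>
definition post :: "nat \<Rightarrow> (nat \<Rightarrow> nat) \<Rightarrow> (nat \<Rightarrow> nat \<times> nat) \<Rightarrow> nat \<Rightarrow> nat \<times> nat" where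
  "post k \<alpha> \<sigma> = (\<lambda>i. if i \<le> k then (\<alpha> (fst (\<sigma> i)), \<alpha> (snd (\<sigma> i))) else (0, 0))"

text \<open>contravariant (simplicial) action of beta : [j] -> [k]\<close>
definition pre :: "nat \<Rightarrow> (nat \<Rightarrow> nat) \<Rightarrow> (nat \<Rightarrow> nat \<times> nat) \<Rightarrow> nat \<Rightarrow> nat \<times> nat" where
  "pre j \<beta> \<sigma> = (\<lambda>i. if i \<le> j then \<sigma> (\<beta> i) else (0, 0))"

type_synonym 'a etriple = "nat \<times> 'a \<times> (nat \<Rightarrow> nat \<times> nat)"

definition etriples :: "'a sset \<Rightarrow> nat \<Rightarrow> 'a etriple set" where
  "etriples X k = {(m, x, \<sigma>). x \<in> sc X m \<and> nsimp k m \<sigma>}"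

text \<open>generating relation of the coend: (m, X(alpha) x, sigma) ~ (m', x, alpha_* sigma)\<close>
definition coend_step :: "'a sset \<Rightarrow> nat \<Rightarrow> 'a etriple \<Rightarrow> 'a etriple \<Rightarrow> bool" where
  "coend_step X k s t \<longleftrightarrow> (\<exists>m m' \<alpha> x \<sigma>. mor m m' \<alpha> \<and> x \<in> sc X m' \<and> nsimp k m \<sigma> \<and>
       s = (m, sm X m m' \<alpha> x, \<sigma>) \<and> t = (m', x, post k \<alpha> \<sigma>))"

definition coend_eq :: "'a sset \<Rightarrow> nat \<Rightarrow> 'a etriple \<Rightarrow> 'a etriple \<Rightarrow> bool" where
  "coend_eq X k = (\<lambda>s t. coend_step X k s t \<or> coend_step X k t s)\<^sup>*\<^sup>*"

definition eclass :: "'a sset \<Rightarrow> nat \<Rightarrow> 'a etriple \<Rightarrow> 'a etriple set" where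
  "eclass X k t = {s \<in> etriples X k. coend_eq X k t s}"

definition ESd' :: "'a sset \<Rightarrow> 'a etriple set sset" where
  "ESd' X = \<lparr> sc = (\<lambda>k. eclass X k ` etriples X k),
              sm = (\<lambda>j k \<beta> c. (case (SOME t. t \<in> c) of (m, x, \<sigma>) \<Rightarrow>
                                   eclass X j (m, x, pre j \<beta> \<sigma>))) \<rparr>"

text \<open>Obtained by colimit-compatibility from the maps on Delta^n: a k-simplex y of ESd X
(i.e. y in X_(2k+1)) is the image of id_[2k+1] under y : Delta^(2k+1) -> X, and id_[2k+1]
is sent to the chain i |-> (i, k+1+i) in N(Fun([1],[2k+1])).\<close>
definition canon :: "'a sset \<Rightarrow> nat \<Rightarrow> 'a \<Rightarrow> 'a etriple set" where
  "canon X k y = eclass X k (2*k+1, y, (\<lambda>i. if i \<le> k then (i, k+1+i) else (0, 0)))"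

end

theory Submission
  imports Defs "HOL-Library.Product_Lexorder"
begin

lemma mor_le: "mor n m \<alpha> \<Longrightarrow> i \<le> n \<Longrightarrow> \<alpha> i \<le> m"
  by (simp add: mor_def)
lemma mor_mono: "mor n m \<alpha> \<Longrightarrow> i \<le> j \<Longrightarrow> j \<le> n \<Longrightarrow> \<alpha> i \<le> \<alpha> j"
  by (simp add: mor_def)
lemma mor_out: "mor n m \<alpha> \<Longrightarrow> n < i \<Longrightarrow> \<alpha> i = 0"
  by (simp add: mor_def)

lemma mor_eqI: "mor n m \<alpha> \<Longrightarrow> mor n m' \<beta> \<Longrightarrow> (\<And>i. i \<le> n \<Longrightarrow> \<alpha> i = \<beta> i) \<Longrightarrow> \<alpha> = \<beta>"
  by (rule ext) (metis mor_out not_le)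

lemma mor_idm: "mor n n (idm n)"
  by (simp add: mor_def idm_def)

lemma mor_cmp: "mor n m \<alpha> \<Longrightarrow> mor m p \<beta> \<Longrightarrow> mor n p (cmp n \<beta> \<alpha>)"
  unfolding mor_def cmp_def by auto

lemma cmp_idm_left: "mor n m \<alpha> \<Longrightarrow> cmp n (idm m) \<alpha> = \<alpha>"
  by (rule ext) (auto simp: cmp_def idm_def mor_def)

lemma cmp_idm_right: "mor n m \<alpha> \<Longrightarrow> cmp n \<alpha> (idm n) = \<alpha>"
  by (rule ext) (auto simp: cmp_def idm_def mor_def)

lemma cmp_assoc: "mor n m \<alpha> \<Longrightarrow> mor m p \<beta> \<Longrightarrow> cmp n \<gamma> (cmp n \<beta> \<alpha>) = cmp n (cmp m \<gamma> \<beta>) \<alpha>"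
  by (rule ext) (auto simp: cmp_def mor_def)

lemma cmp_apply: "i \<le> n \<Longrightarrow> cmp n \<beta> \<alpha> i = \<beta> (\<alpha> i)"
  by (simp add: cmp_def)

lemma sset_sc: "sset X \<Longrightarrow> mor n m \<alpha> \<Longrightarrow> x \<in> sc X m \<Longrightarrow> sm X n m \<alpha> x \<in> sc X n"
  by (simp add: sset_def)
lemma sset_id: "sset X \<Longrightarrow> x \<in> sc X n \<Longrightarrow> sm X n n (idm n) x = x"
  by (simp add: sset_def)
lemma sset_cmp: "sset X \<Longrightarrow> mor n m \<alpha> \<Longrightarrow> mor m p \<beta> \<Longrightarrow> x \<in> sc X p \<Longrightarrow>
   sm X n m \<alpha> (sm X m p \<beta> x) = sm X n p (cmp n \<beta> \<alpha>) x"
  by (simp add: sset_def)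

section \<open>Enumerations of finite linearly ordered sets\<close>

definition en :: "'b::linorder set \<Rightarrow> nat \<Rightarrow> 'b" where
  "en V i = sorted_list_of_set V ! i"
definition ix :: "'b::linorder set \<Rightarrow> 'b \<Rightarrow> nat" where
  "ix V v = card {u\<in>V. u < v}"

lemma en_in: "finite V \<Longrightarrow> i < card V \<Longrightarrow> en V i \<in> V"
  unfolding en_def by (metis nth_mem sorted_list_of_set.length_sorted_key_list_of_set sorted_list_of_set.set_sorted_key_list_of_set)

lemma en_strict: "finite V \<Longrightarrow> i < j \<Longrightarrow> j < card V \<Longrightarrow> en V i < en V j"
  unfolding en_def using sorted_wrt_nth_less[OF sorted_list_of_set.strict_sorted_key_list_of_set[of V]]
  by simp

lemma en_mono: "finite V \<Longrightarrow> i \<le> j \<Longrightarrow> j < card V \<Longrightarrow> en V i \<le> en V j"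
  by (metis en_strict order.order_iff_strict order_refl)

lemma en_surj: "finite V \<Longrightarrow> v \<in> V \<Longrightarrow> \<exists>i<card V. en V i = v"
  unfolding en_def
  by (metis in_set_conv_nth sorted_list_of_set.length_sorted_key_list_of_set sorted_list_of_set.set_sorted_key_list_of_set)

lemma ix_en: assumes "finite V" "i < card V" shows "ix V (en V i) = i"
proof -
  have "{u\<in>V. u < en V i} = en V ` {..<i}"
  proof
    show "{u \<in> V. u < en V i} \<subseteq> en V ` {..<i}"
    proof
      fix u assume u: "u \<in> {u \<in> V. u < en V i}"
      then obtain j where j: "j < card V" "en V j = u" using en_surj[OF assms(1)] by blast
      have "j < i"
      proof (rule ccontr)
        assume "\<not> j < i" then have "en V i \<le> en V j" using en_mono[OF assms(1), of i j] j by simp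
        then show False using u j by auto
      qed
      then show "u \<in> en V ` {..<i}" using j by auto
    qed
  next
    show "en V ` {..<i} \<subseteq> {u \<in> V. u < en V i}"
      using assms en_in en_strict by fastforce
  qed
  moreover have "inj_on (en V) {..<i}"
  proof (rule inj_onI)
    fix a b assume "a \<in> {..<i}" "b \<in> {..<i}" "en V a = en V b"
    then show "a = b" using en_strict[OF assms(1), of a b] en_strict[OF assms(1), of b a] assms(2)
      by (cases a b rule: linorder_cases) auto
  qed
  ultimately show ?thesis unfolding ix_def by (simp add: card_image)
qed

lemma en_ix: "finite V \<Longrightarrow> v \<in> V \<Longrightarrow> en V (ix V v) = v"
  by (metis en_surj ix_en)

lemma ix_lt: "finite V \<Longrightarrow> v \<in> V \<Longrightarrow> ix V v < card V"
  by (metis en_surj ix_en)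

lemma ix_mono: "finite V \<Longrightarrow> u \<le> v \<Longrightarrow> ix V u \<le> ix V v"
  unfolding ix_def by (rule card_mono) auto

lemma ix_strict: "finite V \<Longrightarrow> u \<in> V \<Longrightarrow> u < v \<Longrightarrow> ix V u < ix V v"
  unfolding ix_def by (rule psubset_card_mono) auto

lemma ix_inj: "finite V \<Longrightarrow> u \<in> V \<Longrightarrow> v \<in> V \<Longrightarrow> ix V u = ix V v \<Longrightarrow> u = v"
  by (metis en_ix)

definition smor :: "nat \<Rightarrow> nat \<Rightarrow> (nat \<Rightarrow> nat) \<Rightarrow> bool" where
  "smor n m s \<longleftrightarrow> mor n m s \<and> (\<forall>j\<le>m. \<exists>i\<le>n. s i = j)"
definition imor :: "nat \<Rightarrow> nat \<Rightarrow> (nat \<Rightarrow> nat) \<Rightarrow> bool" where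
  "imor n m d \<longleftrightarrow> mor n m d \<and> (\<forall>i j. i < j \<and> j \<le> n \<longrightarrow> d i < d j)"

lemma smor_mor: "smor n m s \<Longrightarrow> mor n m s" by (simp add: smor_def)
lemma imor_mor: "imor n m s \<Longrightarrow> mor n m s" by (simp add: imor_def)

lemma smor_idm: "smor n n (idm n)"
  unfolding smor_def by (intro conjI mor_idm) (auto simp: idm_def)
lemma imor_idm: "imor n n (idm n)"
  unfolding imor_def by (intro conjI mor_idm) (auto simp: idm_def)

lemma smor_image: "smor n m s \<Longrightarrow> s ` {0..n} = {0..m}"
  unfolding smor_def mor_def by force

lemma imor_step: "imor n m d \<Longrightarrow> i + k \<le> n \<Longrightarrow> d i + k \<le> d (i + k)"
proof (induction k)
  case 0 then show ?case by simp
next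
  case (Suc k)
  then have "d (i + k) < d (i + Suc k)" unfolding imor_def by simp
  with Suc show ?case by simp
qed

lemma imor_ge: "imor n m d \<Longrightarrow> i \<le> n \<Longrightarrow> i \<le> d i"
  using imor_step[of n m d 0 i] by simp

lemma imor_le: "imor n m d \<Longrightarrow> n \<le> m"
  by (meson imor_def imor_ge le_trans mor_le order_refl)

lemma imor_endo: assumes "imor n n d" shows "d = idm n"
proof (rule mor_eqI[OF imor_mor[OF assms] mor_idm])
  fix i assume i: "i \<le> n"
  have "d i + (n - i) \<le> d n" using imor_step[OF assms, of i "n - i"] i by simp
  moreover have "d n \<le> n" using assms imor_mor mor_le by blast
  moreover have "i \<le> d i" using imor_ge[OF assms i] .
  ultimately show "d i = idm n i" using i by (simp add: idm_def)
qed

lemma smor_le: assumes "smor n m s" shows "m \<le> n"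
proof -
  have "card {0..m} \<le> card {0..n}"
    using smor_image[OF assms] card_image_le[of "{0..n}" s] by simp
  then show ?thesis by simp
qed

lemma smor_endo: assumes "smor n n s" shows "s = idm n"
proof -
  have img: "s ` {0..n} = {0..n}" using smor_image[OF assms] .
  then have inj: "inj_on s {0..n}"
    by (simp add: eq_card_imp_inj_on)
  have "imor n n s" unfolding imor_def
  proof (intro conjI allI impI)
    show "mor n n s" using assms smor_mor by blast
    fix i j assume "i < j \<and> j \<le> n"
    then have "s i \<le> s j" "s i \<noteq> s j"
      using mor_mono[OF smor_mor[OF assms], of i j] inj_onD[OF inj, of i j] by auto
    then show "s i < s j" by simp
  qed
  then show ?thesis by (rule imor_endo)
qed

lemma smor_cmp: "smor n m \<alpha> \<Longrightarrow> smor m p \<beta> \<Longrightarrow> smor n p (cmp n \<beta> \<alpha>)"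
  unfolding smor_def using mor_cmp cmp_apply by metis

lemma imor_cmp: "imor n m \<alpha> \<Longrightarrow> imor m p \<beta> \<Longrightarrow> imor n p (cmp n \<beta> \<alpha>)"
  unfolding imor_def using mor_cmp by (auto simp: cmp_def mor_def)

lemma imor_image_card:
  assumes "imor r m d"
  shows "card (d ` {0..r}) = Suc r"
proof -
  have "inj_on d {0..r}"
    by (rule inj_onI) (metis assms imor_def atLeastAtMost_iff linorder_neqE order_less_irrefl)
  then show ?thesis by (simp add: card_image)
qed

lemma imor_en:
  assumes "imor r m d" "i \<le> r"
  shows "d i = en (d ` {0..r}) i"
proof -
  let ?V = "d ` {0..r}"
  have "{u \<in> ?V. u < d i} = d ` {0..<i}"
  proof
    show "{u \<in> ?V. u < d i} \<subseteq> d ` {0..<i}"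
    proof
      fix u assume "u \<in> {u \<in> ?V. u < d i}"
      then obtain j where j: "j \<le> r" "u = d j" "d j < d i" by auto
      have "j < i"
      proof (rule ccontr)
        assume "\<not> j < i"
        then have "d i \<le> d j" using assms imor_mor mor_mono j by (metis not_less)
        then show False using j by simp
      qed
      then show "u \<in> d ` {0..<i}" using j by auto
    qed
  next
    show "d ` {0..<i} \<subseteq> {u \<in> ?V. u < d i}"
      using assms unfolding imor_def by auto
  qed
  moreover have "inj_on d {0..<i}"
    by (rule inj_onI) (metis assms atLeastLessThan_iff imor_def linorder_neqE order.strict_trans1 order_less_irrefl less_imp_le_nat)
  ultimately have "ix ?V (d i) = i" unfolding ix_def by (simp add: card_image)
  moreover have "d i \<in> ?V" using assms by auto
  ultimately show ?thesis using en_ix[of ?V "d i"] by simp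
qed

lemma imor_unique:
  assumes "imor r m d" "imor r' m' d'" "d ` {0..r} = d' ` {0..r'}"
  shows "r = r' \<and> d = d'"
proof -
  have "Suc r = Suc r'" using imor_image_card[OF assms(1)] imor_image_card[OF assms(2)] assms(3) by simp
  then have rr: "r = r'" by simp
  have "d = d'"
  proof (rule mor_eqI[OF imor_mor[OF assms(1)] imor_mor[OF assms(2)[folded rr]]])
    fix i assume "i \<le> r"
    then show "d i = d' i" using imor_en[OF assms(1), of i] imor_en[OF assms(2), of i] rr assms(3) by simp
  qed
  with rr show ?thesis by simp
qed

section \<open>Image factorization and sections\<close>

lemma mor_factor:
  assumes h: "mor n m h"
  shows "\<exists>r e d. smor n r e \<and> imor r m d \<and> h = cmp n d e"
proof -
  define V where "V = h ` {0..n}"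
  have fin: "finite V" and ne: "V \<noteq> {}" unfolding V_def by auto
  then have cV: "card V > 0" by (simp add: card_gt_0_iff)
  define r where "r = card V - 1"
  have cVr: "card V = Suc r" using cV r_def by simp
  define d where "d = (\<lambda>i. if i \<le> r then en V i else 0)"
  define e where "e = (\<lambda>i. if i \<le> n then ix V (h i) else 0)"
  have Vm: "\<And>v. v \<in> V \<Longrightarrow> v \<le> m" using h unfolding V_def mor_def by auto
  have "imor r m d" unfolding imor_def mor_def d_def
    using en_in[OF fin] en_strict[OF fin] en_mono[OF fin] Vm cVr
    by (auto simp: less_Suc_eq_le)
  moreover have "mor n r e" unfolding mor_def
  proof (intro conjI allI impI)
    fix i assume "i \<le> n"
    then have "h i \<in> V" unfolding V_def by auto
    then show "e i \<le> r" using ix_lt[OF fin] cVr \<open>i \<le> n\<close> e_def by fastforce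
  next
    fix i j assume "i \<le> j \<and> j \<le> n"
    then show "e i \<le> e j"
      using ix_mono[OF fin] mor_mono[OF h] e_def by auto
  qed (simp add: e_def)
  moreover have "\<forall>j\<le>r. \<exists>i\<le>n. e i = j"
  proof (intro allI impI)
    fix j assume "j \<le> r"
    then have "en V j \<in> V" using en_in[OF fin] cVr by simp
    then obtain i where i: "i \<le> n" "h i = en V j" unfolding V_def by auto
    then have "e i = j" using ix_en[OF fin, of j] cVr \<open>j \<le> r\<close> e_def by simp
    then show "\<exists>i\<le>n. e i = j" using i(1) by blast
  qed
  moreover have "h = cmp n d e"
  proof (rule ext)
    fix i show "h i = cmp n d e i"
    proof (cases "i \<le> n")
      case True
      then have "h i \<in> V" unfolding V_def by auto
      then show ?thesis using True en_ix[OF fin] ix_lt[OF fin] cVr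
        by (auto simp: cmp_def d_def e_def less_Suc_eq_le)
    next
      case False then show ?thesis using h by (simp add: cmp_def mor_def)
    qed
  qed
  ultimately show ?thesis unfolding smor_def by blast
qed

lemma smor_section:
  assumes s: "smor n m s" and i: "i \<le> n"
  shows "\<exists>d. mor m n d \<and> cmp m s d = idm m \<and> d (s i) = i"
proof -
  have sm: "mor n m s" using s smor_mor by blast
  define d where "d = (\<lambda>v. if v \<le> m then (if v = s i then i else (LEAST j. s j = v)) else 0)"
  have key: "\<And>v. v \<le> m \<Longrightarrow> d v \<le> n \<and> s (d v) = v"
  proof -
    fix v assume v: "v \<le> m"
    show "d v \<le> n \<and> s (d v) = v"
    proof (cases "v = s i")
      case True then show ?thesis using v i by (simp add: d_def)
    next
      case False
      obtain j where j: "j \<le> n" "s j = v" using s v unfolding smor_def by blast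
      have "(LEAST j. s j = v) \<le> j" by (rule Least_le) (simp add: j)
      moreover have "s (LEAST j. s j = v) = v" by (rule LeastI) (rule j(2))
      ultimately show ?thesis using False v j by (simp add: d_def)
    qed
  qed
  have "mor m n d" unfolding mor_def
  proof (intro conjI allI impI)
    fix v assume "v \<le> m" then show "d v \<le> n" using key by blast
  next
    fix u v assume uv: "u \<le> v \<and> v \<le> m"
    show "d u \<le> d v"
    proof (rule ccontr)
      assume "\<not> d u \<le> d v"
      then have "s (d v) \<le> s (d u)" using mor_mono[OF sm, of "d v" "d u"] key uv by simp
      then have "v \<le> u" using key uv by simp
      then have "u = v" using uv by simp
      then show False using \<open>\<not> d u \<le> d v\<close> by simp
    qed
  next
    fix v assume "m < v" then show "d v = 0" by (simp add: d_def)
  qed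
  moreover have "cmp m s d = idm m"
    by (rule ext) (simp add: cmp_def idm_def key)
  moreover have "d (s i) = i" using mor_le[OF sm i] by (simp add: d_def)
  ultimately show ?thesis by blast
qed

section \<open>Eilenberg-Zilber lemma\<close>

definition degen :: "'a sset \<Rightarrow> nat \<Rightarrow> 'a \<Rightarrow> bool" where
  "degen X m x \<longleftrightarrow> (\<exists>q s y. q < m \<and> smor m q s \<and> y \<in> sc X q \<and> x = sm X m q s y)"
definition nd :: "'a sset \<Rightarrow> nat \<Rightarrow> 'a \<Rightarrow> bool" where
  "nd X m y \<longleftrightarrow> y \<in> sc X m \<and> \<not> degen X m y"

lemma ez_exists:
  assumes X: "sset X"
  shows "x \<in> sc X m \<Longrightarrow> \<exists>q s y. smor m q s \<and> nd X q y \<and> x = sm X m q s y"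
proof (induction m arbitrary: x rule: less_induct)
  case (less m)
  show ?case
  proof (cases "degen X m x")
    case False
    then have "nd X m x" using less.prems by (simp add: nd_def)
    then show ?thesis using smor_idm sset_id[OF X less.prems] by metis
  next
    case True
    then obtain q s y where q: "q < m" "smor m q s" "y \<in> sc X q" "x = sm X m q s y"
      unfolding degen_def by blast
    from less.IH[OF q(1) q(3)] obtain q' s' y' where
      r: "smor q q' s'" "nd X q' y'" "y = sm X q q' s' y'" by blast
    have "y' \<in> sc X q'" using r(2) by (simp add: nd_def)
    then have "x = sm X m q' (cmp m s' s) y'"
      using q(4) r(3) sset_cmp[OF X smor_mor[OF q(2)] smor_mor[OF r(1)]] by simp
    moreover have "smor m q' (cmp m s' s)" using smor_cmp q(2) r(1) by blast
    ultimately show ?thesis using r(2) by blast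
  qed
qed

lemma ez_unique_aux:
  assumes X: "sset X"
    and s: "smor m q s" and y: "nd X q y" and s': "smor m q' s'" and y': "nd X q' y'"
    and eq: "sm X m q s y = sm X m q' s' y'"
    and d: "mor q m d" "cmp q s d = idm q"
  shows "imor q q' (cmp q s' d) \<and> y = sm X q q' (cmp q s' d) y'"
proof -
  have ysc: "y \<in> sc X q" and y'sc: "y' \<in> sc X q'" using y y' by (simp_all add: nd_def)
  have h: "mor q q' (cmp q s' d)" using mor_cmp[OF d(1) smor_mor[OF s']] .
  have yeq: "y = sm X q q' (cmp q s' d) y'"
  proof -
    have "y = sm X q q (idm q) y" using sset_id[OF X ysc] by simp
    also have "\<dots> = sm X q m d (sm X m q s y)"
      using sset_cmp[OF X d(1) smor_mor[OF s] ysc] d(2) by simp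
    also have "\<dots> = sm X q m d (sm X m q' s' y')" using eq by simp
    also have "\<dots> = sm X q q' (cmp q s' d) y'"
      using sset_cmp[OF X d(1) smor_mor[OF s'] y'sc] by simp
    finally show ?thesis .
  qed
  obtain r e \<delta> where f: "smor q r e" "imor r q' \<delta>" "cmp q s' d = cmp q \<delta> e"
    using mor_factor[OF h] by blast
  have "r \<le> q" using smor_le[OF f(1)] .
  moreover have "\<not> r < q"
  proof
    assume rq: "r < q"
    have "y = sm X q r e (sm X r q' \<delta> y')"
      using yeq f(3) sset_cmp[OF X smor_mor[OF f(1)] imor_mor[OF f(2)] y'sc] by simp
    moreover have "sm X r q' \<delta> y' \<in> sc X r" using sset_sc[OF X imor_mor[OF f(2)] y'sc] .
    ultimately have "degen X q y" unfolding degen_def using rq f(1) by blast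
    then show False using y by (simp add: nd_def)
  qed
  ultimately have "r = q" by simp
  then have "e = idm q" using smor_endo f(1) by simp
  then have "cmp q s' d = \<delta>" using f(3) cmp_idm_right[OF imor_mor[OF f(2)]] \<open>r = q\<close> by simp
  then show ?thesis using f(2) \<open>r = q\<close> yeq by simp
qed

lemma ez_unique:
  assumes X: "sset X"
    and s: "smor m q s" and y: "nd X q y" and s': "smor m q' s'" and y': "nd X q' y'"
    and eq: "sm X m q s y = sm X m q' s' y'"
  shows "q = q' \<and> s = s' \<and> y = y'"
proof -
  obtain d where d: "mor q m d" "cmp q s d = idm q" using smor_section[OF s, of 0] by blast
  obtain d' where d': "mor q' m d'" "cmp q' s' d' = idm q'" using smor_section[OF s', of 0] by blast
  have A: "imor q q' (cmp q s' d)" and yA: "y = sm X q q' (cmp q s' d) y'"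
    using ez_unique_aux[OF X s y s' y' eq d] by blast+
  have B: "imor q' q (cmp q' s d')"
    using ez_unique_aux[OF X s' y' s y eq[symmetric] d'] by blast
  have qq: "q = q'" using imor_le[OF A] imor_le[OF B] by simp
  have ci: "cmp q s' d = idm q" using imor_endo A qq by simp
  have y'q: "y' \<in> sc X q" using y' qq unfolding nd_def by simp
  have yy: "y = y'" using yA unfolding ci qq[symmetric] using sset_id[OF X y'q] by simp
  have "s = s'"
  proof (rule mor_eqI[OF smor_mor[OF s] smor_mor[OF s']])
    fix i assume i: "i \<le> m"
    obtain d2 where d2: "mor q m d2" "cmp q s d2 = idm q" "d2 (s i) = i"
      using smor_section[OF s i] by blast
    have "imor q q' (cmp q s' d2)" using ez_unique_aux[OF X s y s' y' eq d2(1,2)] by blast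
    then have "cmp q s' d2 = idm q" using imor_endo qq by simp
    moreover have "s i \<le> q" using mor_le[OF smor_mor[OF s] i] .
    ultimately have "s' (d2 (s i)) = s i"
      using fun_cong[of "cmp q s' d2" "idm q" "s i"] cmp_apply[of "s i" q s' d2] by (simp add: idm_def)
    then show "s i = s' i" using d2(3) by simp
  qed
  with qq yy show ?thesis by simp
qed


section \<open>Simplices of the nerve of pairs\<close>

definition ple :: "nat \<times> nat \<Rightarrow> nat \<times> nat \<Rightarrow> bool" where
  "ple x y \<longleftrightarrow> fst x \<le> fst y \<and> snd x \<le> snd y"

definition Pm :: "nat \<Rightarrow> (nat \<times> nat) set" where
  "Pm m = {x. fst x \<le> snd x \<and> snd x \<le> m}"

definition chn :: "(nat \<times> nat) set \<Rightarrow> bool" where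
  "chn C \<longleftrightarrow> (\<forall>x\<in>C. \<forall>y\<in>C. ple x y \<or> ple y x)"

definition im :: "nat \<Rightarrow> (nat \<Rightarrow> nat \<times> nat) \<Rightarrow> (nat \<times> nat) set" where
  "im k \<sigma> = \<sigma> ` {0..k}"

definition natS :: "'e sset \<Rightarrow> (nat \<times> (nat \<Rightarrow> nat \<times> nat)) set \<Rightarrow>
    (nat \<Rightarrow> (nat \<Rightarrow> nat \<times> nat) \<Rightarrow> 'e) \<Rightarrow> bool" where
  "natS E S f \<longleftrightarrow> (\<forall>k \<sigma>. (k, \<sigma>) \<in> S \<longrightarrow> f k \<sigma> \<in> sc E k) \<and>
     (\<forall>k l \<beta> \<sigma>. mor l k \<beta> \<and> (k, \<sigma>) \<in> S \<longrightarrow> f l (pre l \<beta> \<sigma>) = sm E l k \<beta> (f k \<sigma>))"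

definition simpS :: "nat \<Rightarrow> (nat \<times> nat) set set \<Rightarrow> (nat \<times> (nat \<Rightarrow> nat \<times> nat)) set" where
  "simpS m F = {(k, \<sigma>). nsimp k m \<sigma> \<and> im k \<sigma> \<in> F}"

lemma ple_lex: "ple x y \<Longrightarrow> x \<le> y"
  by (cases x; cases y) (auto simp: ple_def)

lemma chn_lex: "chn C \<Longrightarrow> x \<in> C \<Longrightarrow> y \<in> C \<Longrightarrow> x \<le> y \<Longrightarrow> ple x y"
  unfolding chn_def
  by (metis antisym ple_def ple_lex order_refl)

lemma nsimp_pre: "nsimp k m \<sigma> \<Longrightarrow> mor l k \<beta> \<Longrightarrow> nsimp l m (pre l \<beta> \<sigma>)"
  unfolding nsimp_def pre_def mor_def by auto

lemma im_pre: "mor l k \<beta> \<Longrightarrow> im l (pre l \<beta> \<sigma>) \<subseteq> im k \<sigma>"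
  unfolding im_def pre_def mor_def by auto

lemma pre_pre: "mor l k \<beta> \<Longrightarrow> mor j l \<gamma> \<Longrightarrow> pre j \<gamma> (pre l \<beta> \<sigma>) = pre j (cmp j \<beta> \<gamma>) \<sigma>"
  by (rule ext) (auto simp: pre_def cmp_def mor_def)

lemma nsimp_im_Pm: "nsimp k m \<sigma> \<Longrightarrow> im k \<sigma> \<subseteq> Pm m"
  unfolding nsimp_def im_def Pm_def by auto

lemma nsimp_ple: "nsimp k m \<sigma> \<Longrightarrow> i \<le> j \<Longrightarrow> j \<le> k \<Longrightarrow> ple (\<sigma> i) (\<sigma> j)"
  unfolding nsimp_def ple_def by auto

lemma nsimp_im_chn: assumes "nsimp k m \<sigma>" shows "chn (im k \<sigma>)"
  unfolding chn_def im_def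
proof (intro ballI)
  fix a b assume "a \<in> \<sigma> ` {0..k}" "b \<in> \<sigma> ` {0..k}"
  then obtain x y where "x \<le> k" "y \<le> k" "a = \<sigma> x" "b = \<sigma> y" by auto
  then show "ple a b \<or> ple b a"
    using nsimp_ple[OF assms, of x y] nsimp_ple[OF assms, of y x] by (cases "x \<le> y") auto
qed

lemma nsimp_out: "nsimp k m \<sigma> \<Longrightarrow> k < i \<Longrightarrow> \<sigma> i = (0, 0)"
  unfolding nsimp_def by auto

lemma nsimp_eqI: "nsimp k m \<sigma> \<Longrightarrow> nsimp k m' \<tau> \<Longrightarrow> (\<And>i. i \<le> k \<Longrightarrow> \<sigma> i = \<tau> i) \<Longrightarrow> \<sigma> = \<tau>"
  by (rule ext) (metis nsimp_out not_le)

lemma natS_mono: "natS E S f \<Longrightarrow> S' \<subseteq> S \<Longrightarrow> natS E S' f"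
  unfolding natS_def by blast

definition cen :: "(nat \<times> nat) set \<Rightarrow> nat \<Rightarrow> nat \<times> nat" where
  "cen C = (\<lambda>i. if i \<le> card C - 1 then en C i else (0, 0))"

definition gam :: "(nat \<times> nat) set \<Rightarrow> nat \<Rightarrow> (nat \<Rightarrow> nat \<times> nat) \<Rightarrow> nat \<Rightarrow> nat" where
  "gam C k \<sigma> = (\<lambda>i. if i \<le> k then ix C (\<sigma> i) else 0)"

locale chainC =
  fixes C :: "(nat \<times> nat) set" and m :: nat
  assumes fin: "finite C" and ne: "C \<noteq> {}" and CP: "C \<subseteq> Pm m" and ch: "chn C"
begin

abbreviation "n \<equiv> card C - 1"

lemma cardC: "card C = Suc n"
  using fin ne by (simp add: card_gt_0_iff)

lemma cen_in: "i \<le> n \<Longrightarrow> cen C i \<in> C"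
  unfolding cen_def using en_in[OF fin] cardC by simp

lemma ix_le: "x \<in> C \<Longrightarrow> ix C x \<le> n"
  using ix_lt[OF fin] cardC by fastforce

lemma ix_cen: "i \<le> n \<Longrightarrow> ix C (cen C i) = i"
  unfolding cen_def using ix_en[OF fin] cardC by simp

lemma cen_ix: "x \<in> C \<Longrightarrow> cen C (ix C x) = x"
  unfolding cen_def using en_ix[OF fin] ix_le by simp

lemma nsimp_cen: "nsimp n m (cen C)"
  unfolding nsimp_def
proof (intro conjI allI impI)
  fix i assume "i \<le> n"
  then have "cen C i \<in> Pm m" using cen_in CP by blast
  then show "fst (cen C i) \<le> snd (cen C i)" "snd (cen C i) \<le> m" unfolding Pm_def by auto
next
  fix i j assume ij: "i \<le> j \<and> j \<le> n"
  then have "en C i \<le> en C j" using en_mono[OF fin] cardC by simp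
  then have "ple (cen C i) (cen C j)" using chn_lex[OF ch] cen_in ij unfolding cen_def by auto
  then show "fst (cen C i) \<le> fst (cen C j)" "snd (cen C i) \<le> snd (cen C j)" unfolding ple_def by auto
next
  fix i assume "n < i" then show "cen C i = (0, 0)" unfolding cen_def by simp
qed

lemma im_cen: "im n (cen C) = C"
  unfolding im_def using cen_in cen_ix ix_le by force

lemma gam_mor: "nsimp k m \<sigma> \<Longrightarrow> im k \<sigma> \<subseteq> C \<Longrightarrow> mor k n (gam C k \<sigma>)"
  unfolding mor_def gam_def
proof (intro conjI allI impI)
  fix i assume "nsimp k m \<sigma>" "im k \<sigma> \<subseteq> C" "i \<le> k"
  then have "\<sigma> i \<in> C" unfolding im_def by auto
  then show "(if i \<le> k then ix C (\<sigma> i) else 0) \<le> n" using ix_le \<open>i \<le> k\<close> by simp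
next
  fix i j assume a: "nsimp k m \<sigma>" "im k \<sigma> \<subseteq> C" "i \<le> j \<and> j \<le> k"
  then have "ple (\<sigma> i) (\<sigma> j)" using nsimp_ple by blast
  then show "(if i \<le> k then ix C (\<sigma> i) else 0) \<le> (if j \<le> k then ix C (\<sigma> j) else 0)"
    using a ix_mono[OF fin] ple_lex by auto
qed auto

lemma pre_gam: "nsimp k m \<sigma> \<Longrightarrow> im k \<sigma> \<subseteq> C \<Longrightarrow> pre k (gam C k \<sigma>) (cen C) = \<sigma>"
  by (rule ext) (auto simp: pre_def gam_def cen_ix im_def nsimp_out image_subset_iff)

lemma gam_pre: "mor l n \<gamma> \<Longrightarrow> gam C l (pre l \<gamma> (cen C)) = \<gamma>"
  by (rule ext) (auto simp: pre_def gam_def ix_cen mor_def)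

lemma gam_pre2: "mor l k \<beta> \<Longrightarrow> gam C l (pre l \<beta> \<sigma>) = cmp l (gam C k \<sigma>) \<beta>"
  by (rule ext) (auto simp: pre_def gam_def cmp_def mor_def)

lemma im_pre_cen: "mor l n \<gamma> \<Longrightarrow> im l (pre l \<gamma> (cen C)) = cen C ` (\<gamma> ` {0..l})"
  unfolding im_def pre_def by auto

end


section \<open>One horn-filling step\<close>

lemma (in chainC) horn_step:
  assumes fib: "inner_fibration E B p"
    and dc: "\<And>D D'. D \<in> F \<Longrightarrow> D' \<subseteq> D \<Longrightarrow> D' \<in> F"
    and z: "z \<in> C" "a \<in> C" "a < z" "b \<in> C" "z < b"
    and faces: "\<And>x. x \<in> C \<Longrightarrow> x \<noteq> z \<Longrightarrow> C - {x} \<in> F"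
    and nz: "C - {z} \<notin> F"
    and f: "natS E (simpS m F) f"
    and g: "natS B (simpS m UNIV) g"
    and pf: "\<And>k \<sigma>. (k, \<sigma>) \<in> simpS m F \<Longrightarrow> p k (f k \<sigma>) = g k \<sigma>"
  shows "\<exists>f'. natS E (simpS m (F \<union> Pow C)) f' \<and> (\<forall>k \<sigma>. (k, \<sigma>) \<in> simpS m F \<longrightarrow> f' k \<sigma> = f k \<sigma>)
           \<and> (\<forall>k \<sigma>. (k, \<sigma>) \<in> simpS m (F \<union> Pow C) \<longrightarrow> p k (f' k \<sigma>) = g k \<sigma>)"
proof -
  define j where "j = ix C z"
  have "ix C a < j" unfolding j_def using ix_strict[OF fin z(2,3)] .
  then have j0: "0 < j" by simp
  have "j < ix C b" unfolding j_def using ix_strict[OF fin z(1,5)] .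
  then have jn: "j < n" using ix_le[OF z(4)] by simp
  have llp: "llp (horn n j) (simplex n) (\<lambda>j \<alpha>. \<alpha>) E B p"
    using fib j0 jn unfolding inner_fibration_def by blast
  have Eset: "sset E" and Bset: "sset B" using fib unfolding inner_fibration_def by auto
  define \<tau> where "\<tau> = cen C"
  have ns\<tau>: "nsimp n m \<tau>" unfolding \<tau>_def by (rule nsimp_cen)
  have hornF: "im l (pre l \<gamma> \<tau>) \<in> F" if "\<gamma> \<in> sc (horn n j) l" for l \<gamma>
  proof -
    from that obtain i where i: "mor l n \<gamma>" "i \<le> n" "i \<noteq> j" "i \<notin> \<gamma> ` {0..l}"
      unfolding horn_def by auto
    have "cen C i \<noteq> z" using i(2,3) ix_cen j_def by metis
    moreover have "cen C i \<in> C" using cen_in i(2) .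
    ultimately have F1: "C - {cen C i} \<in> F" using faces by blast
    have "im l (pre l \<gamma> \<tau>) \<subseteq> C - {cen C i}"
    proof
      fix y assume "y \<in> im l (pre l \<gamma> \<tau>)"
      then obtain i' where i': "i' \<le> l" "y = cen C (\<gamma> i')" unfolding im_def pre_def \<tau>_def by auto
      have gi: "\<gamma> i' \<le> n" using mor_le[OF i(1) i'(1)] .
      have "\<gamma> i' \<noteq> i" using i(4) i'(1) by auto
      then have "cen C (\<gamma> i') \<noteq> cen C i" using ix_cen gi i(2) by metis
      then show "y \<in> C - {cen C i}" using cen_in[OF gi] i' by auto
    qed
    then show ?thesis using dc F1 by blast
  qed
  have Fhorn: "gam C k \<sigma> \<in> sc (horn n j) k" if "nsimp k m \<sigma>" "im k \<sigma> \<subseteq> C" "im k \<sigma> \<in> F" for k \<sigma>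
  proof -
    have gm: "mor k n (gam C k \<sigma>)" using gam_mor that(1,2) .
    have "\<exists>i\<le>n. i \<noteq> j \<and> i \<notin> gam C k \<sigma> ` {0..k}"
    proof (rule ccontr)
      assume "\<not> ?thesis"
      then have all: "\<And>i. i \<le> n \<Longrightarrow> i \<noteq> j \<Longrightarrow> i \<in> gam C k \<sigma> ` {0..k}" by blast
      have "C - {z} \<subseteq> im k \<sigma>"
      proof
        fix x assume x: "x \<in> C - {z}"
        then have "ix C x \<noteq> j" unfolding j_def using ix_inj[OF fin] z(1) by blast
        moreover have "ix C x \<le> n" using ix_le x by simp
        ultimately have "ix C x \<in> gam C k \<sigma> ` {0..k}" using all by blast
        then obtain i' where i': "i' \<le> k" "ix C x = gam C k \<sigma> i'" by auto
        then have "ix C x = ix C (\<sigma> i')" unfolding gam_def by simp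
        moreover have "\<sigma> i' \<in> C" using that(2) i'(1) unfolding im_def by auto
        ultimately have "x = \<sigma> i'" using ix_inj[OF fin] x by blast
        then show "x \<in> im k \<sigma>" using i'(1) unfolding im_def by auto
      qed
      then have "C - {z} \<in> F" using dc that(3) by blast
      then show False using nz by blast
    qed
    then show ?thesis using gm unfolding horn_def by simp
  qed
  define u where "u = (\<lambda>l \<gamma>. f l (pre l \<gamma> \<tau>))"
  define v where "v = (\<lambda>l \<gamma>. g l (pre l \<gamma> \<tau>))"
  have hornmor: "\<gamma> \<in> sc (horn n j) l \<Longrightarrow> mor l n \<gamma>" for l \<gamma> unfolding horn_def by simp
  have inS: "(l, pre l \<gamma> \<tau>) \<in> simpS m F" if "\<gamma> \<in> sc (horn n j) l" for l \<gamma>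
    using hornF[OF that] nsimp_pre[OF ns\<tau> hornmor[OF that]] unfolding simpS_def by simp
  have u: "sset_map (horn n j) E u"
    unfolding sset_map_def
  proof (intro conjI allI impI)
    fix l \<gamma> assume "\<gamma> \<in> sc (horn n j) l"
    then show "u l \<gamma> \<in> sc E l" unfolding u_def using f inS unfolding natS_def by blast
  next
    fix l l' \<beta> \<gamma> assume a: "mor l l' \<beta> \<and> \<gamma> \<in> sc (horn n j) l'"
    have "u l (sm (horn n j) l l' \<beta> \<gamma>) = f l (pre l (cmp l \<gamma> \<beta>) \<tau>)"
      unfolding u_def horn_def by simp
    also have "\<dots> = f l (pre l \<beta> (pre l' \<gamma> \<tau>))"
      using pre_pre[OF hornmor a[THEN conjunct1]] a by simp
    also have "\<dots> = sm E l l' \<beta> (f l' (pre l' \<gamma> \<tau>))"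
      using f inS a unfolding natS_def by blast
    finally show "u l (sm (horn n j) l l' \<beta> \<gamma>) = sm E l l' \<beta> (u l' \<gamma>)" unfolding u_def .
  qed
  have smpl: "\<gamma> \<in> sc (simplex n) l \<longleftrightarrow> mor l n \<gamma>" for l \<gamma> unfolding simplex_def by simp
  have inU: "(l, pre l \<gamma> \<tau>) \<in> simpS m UNIV" if "mor l n \<gamma>" for l \<gamma>
    using nsimp_pre[OF ns\<tau> that] unfolding simpS_def by simp
  have v: "sset_map (simplex n) B v"
    unfolding sset_map_def
  proof (intro conjI allI impI)
    fix l \<gamma> assume "\<gamma> \<in> sc (simplex n) l"
    then show "v l \<gamma> \<in> sc B l" unfolding v_def using g inU smpl unfolding natS_def by blast
  next
    fix l l' \<beta> \<gamma> assume a: "mor l l' \<beta> \<and> \<gamma> \<in> sc (simplex n) l'"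
    have "v l (sm (simplex n) l l' \<beta> \<gamma>) = g l (pre l (cmp l \<gamma> \<beta>) \<tau>)"
      unfolding v_def simplex_def by simp
    also have "\<dots> = g l (pre l \<beta> (pre l' \<gamma> \<tau>))"
      using pre_pre[of l' n \<gamma> l \<beta>] a smpl by simp
    also have "\<dots> = sm B l l' \<beta> (g l' (pre l' \<gamma> \<tau>))"
      using g inU a smpl unfolding natS_def by blast
    finally show "v l (sm (simplex n) l l' \<beta> \<gamma>) = sm B l l' \<beta> (v l' \<gamma>)" unfolding v_def .
  qed
  have comm: "\<forall>l \<gamma>. \<gamma> \<in> sc (horn n j) l \<longrightarrow> p l (u l \<gamma>) = v l ((\<lambda>j \<alpha>. \<alpha>) l \<gamma>)"
    unfolding u_def v_def using pf inS by blast
  obtain w0 where w0: "sset_map (simplex n) E w0"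
    "\<And>l \<gamma>. \<gamma> \<in> sc (horn n j) l \<Longrightarrow> w0 l \<gamma> = u l \<gamma>"
    "\<And>l \<gamma>. \<gamma> \<in> sc (simplex n) l \<Longrightarrow> p l (w0 l \<gamma>) = v l \<gamma>"
    using llp u v comm unfolding llp_def by fastforce
  define f' where "f' = (\<lambda>k \<sigma>. if im k \<sigma> \<in> F then f k \<sigma> else w0 k (gam C k \<sigma>))"
  have w0sc: "mor l n \<gamma> \<Longrightarrow> w0 l \<gamma> \<in> sc E l" for l \<gamma> using w0(1) smpl unfolding sset_map_def by blast
  have w0nat: "mor l l' \<beta> \<Longrightarrow> mor l' n \<gamma> \<Longrightarrow> w0 l (cmp l \<gamma> \<beta>) = sm E l l' \<beta> (w0 l' \<gamma>)" for l l' \<beta> \<gamma>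
    using w0(1) smpl unfolding sset_map_def simplex_def by auto
  have main: "natS E (simpS m (F \<union> Pow C)) f'"
    unfolding natS_def
  proof (intro conjI allI impI)
    fix k \<sigma> assume a: "(k, \<sigma>) \<in> simpS m (F \<union> Pow C)"
    show "f' k \<sigma> \<in> sc E k"
    proof (cases "im k \<sigma> \<in> F")
      case True then show ?thesis using f a unfolding f'_def natS_def simpS_def by auto
    next
      case False then show ?thesis using a gam_mor w0sc unfolding f'_def simpS_def by auto
    qed
  next
    fix k l \<beta> \<sigma> assume a: "mor l k \<beta> \<and> (k, \<sigma>) \<in> simpS m (F \<union> Pow C)"
    then have \<beta>: "mor l k \<beta>" and ns: "nsimp k m \<sigma>" and imF: "im k \<sigma> \<in> F \<union> Pow C"
      unfolding simpS_def by auto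
    have nsp: "nsimp l m (pre l \<beta> \<sigma>)" using nsimp_pre[OF ns \<beta>] .
    have imp: "im l (pre l \<beta> \<sigma>) \<subseteq> im k \<sigma>" using im_pre[OF \<beta>] .
    show "f' l (pre l \<beta> \<sigma>) = sm E l k \<beta> (f' k \<sigma>)"
    proof (cases "im k \<sigma> \<in> F")
      case True
      then have "im l (pre l \<beta> \<sigma>) \<in> F" using dc imp by blast
      then show ?thesis using True f \<beta> ns unfolding f'_def natS_def simpS_def by auto
    next
      case False
      then have sub: "im k \<sigma> \<subseteq> C" using imF by auto
      have subp: "im l (pre l \<beta> \<sigma>) \<subseteq> C" using imp sub by blast
      have gm: "mor k n (gam C k \<sigma>)" using gam_mor[OF ns sub] .
      have gp: "gam C l (pre l \<beta> \<sigma>) = cmp l (gam C k \<sigma>) \<beta>" using gam_pre2[OF \<beta>] .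
      have rhs: "sm E l k \<beta> (f' k \<sigma>) = w0 l (cmp l (gam C k \<sigma>) \<beta>)"
        using False w0nat[OF \<beta> gm] unfolding f'_def by simp
      show ?thesis
      proof (cases "im l (pre l \<beta> \<sigma>) \<in> F")
        case True
        have "f' l (pre l \<beta> \<sigma>) = f l (pre l \<beta> \<sigma>)" using True unfolding f'_def by simp
        also have "\<dots> = f l (pre l (gam C l (pre l \<beta> \<sigma>)) \<tau>)"
          using pre_gam[OF nsp subp] unfolding \<tau>_def by simp
        also have "\<dots> = w0 l (gam C l (pre l \<beta> \<sigma>))"
          using w0(2)[OF Fhorn[OF nsp subp True]] unfolding u_def by simp
        finally show ?thesis using rhs gp by simp
      next
        case False
        then show ?thesis using rhs gp unfolding f'_def by simp
      qed
    qed
  qed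
  have agree: "\<forall>k \<sigma>. (k, \<sigma>) \<in> simpS m F \<longrightarrow> f' k \<sigma> = f k \<sigma>"
    unfolding f'_def simpS_def by auto
  have pcomm: "\<forall>k \<sigma>. (k, \<sigma>) \<in> simpS m (F \<union> Pow C) \<longrightarrow> p k (f' k \<sigma>) = g k \<sigma>"
  proof (intro allI impI)
    fix k \<sigma> assume a: "(k, \<sigma>) \<in> simpS m (F \<union> Pow C)"
    show "p k (f' k \<sigma>) = g k \<sigma>"
    proof (cases "im k \<sigma> \<in> F")
      case True then show ?thesis using a pf unfolding f'_def simpS_def by auto
    next
      case False
      then have ns: "nsimp k m \<sigma>" and sub: "im k \<sigma> \<subseteq> C" using a unfolding simpS_def by auto
      have "p k (f' k \<sigma>) = v k (gam C k \<sigma>)"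
        using False w0(3) gam_mor[OF ns sub] smpl unfolding f'_def by simp
      also have "\<dots> = g k \<sigma>" unfolding v_def \<tau>_def using pre_gam[OF ns sub] by simp
      finally show ?thesis .
    qed
  qed
  show ?thesis using main agree pcomm by blast
qed


section \<open>Combinatorics of the pairing\<close>

definition cov :: "nat \<Rightarrow> (nat \<times> nat) set \<Rightarrow> bool" where
  "cov m D \<longleftrightarrow> (\<forall>v\<le>m. \<exists>y\<in>D. fst y = v \<or> snd y = v)"
definition esd :: "(nat \<times> nat) set \<Rightarrow> bool" where
  "esd D \<longleftrightarrow> (\<forall>x\<in>D. \<forall>y\<in>D. fst x \<le> snd y)"
definition Kf :: "nat \<Rightarrow> (nat \<times> nat) set set" where
  "Kf m = {D. \<not> cov m D \<or> esd D}"
definition MM :: "nat \<Rightarrow> (nat \<times> nat) set \<Rightarrow> bool" where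
  "MM m D \<longleftrightarrow> finite D \<and> D \<subseteq> Pm m \<and> chn D \<and> cov m D \<and> \<not> esd D"
definition bet :: "(nat \<times> nat) set \<Rightarrow> nat" where
  "bet D = Min (snd ` D)"
definition bst :: "(nat \<times> nat) set \<Rightarrow> nat" where
  "bst D = Min (snd ` {y\<in>D. bet D < fst y})"
definition zz :: "(nat \<times> nat) set \<Rightarrow> nat \<times> nat" where
  "zz D = (bet D, bst D)"
definition TT :: "nat \<Rightarrow> (nat \<times> nat) set set" where
  "TT m = {C. MM m C \<and> zz C \<in> C}"
definition rr :: "(nat \<times> nat) set \<Rightarrow> nat" where
  "rr D = card {y\<in>D. fst y \<le> bet D}"
definition rk :: "nat \<Rightarrow> (nat \<times> nat) set \<Rightarrow> nat \<times> nat \<times> nat" where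
  "rk m D = (card D, m - bet D, card D - rr D)"

lemma Kf_dc: "D \<in> Kf m \<Longrightarrow> D' \<subseteq> D \<Longrightarrow> D' \<in> Kf m"
  unfolding Kf_def cov_def esd_def by blast

lemma bet_eqI: "finite D \<Longrightarrow> y \<in> D \<Longrightarrow> snd y = b \<Longrightarrow> (\<And>y. y \<in> D \<Longrightarrow> b \<le> snd y) \<Longrightarrow> bet D = b"
  unfolding bet_def by (rule Min_eqI) auto

lemma bet_props: "finite D \<Longrightarrow> D \<noteq> {} \<Longrightarrow> (\<exists>y\<in>D. snd y = bet D) \<and> (\<forall>y\<in>D. bet D \<le> snd y)"
proof -
  assume a: "finite D" "D \<noteq> {}"
  then have "Min (snd ` D) \<in> snd ` D" by (intro Min_in) auto
  moreover have "\<forall>y\<in>D. Min (snd ` D) \<le> snd y" using a by auto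
  ultimately show ?thesis unfolding bet_def by force
qed

lemma bst_eqI: "finite D \<Longrightarrow> y \<in> D \<Longrightarrow> bet D < fst y \<Longrightarrow> snd y = c \<Longrightarrow>
   (\<And>y. y \<in> D \<Longrightarrow> bet D < fst y \<Longrightarrow> c \<le> snd y) \<Longrightarrow> bst D = c"
  unfolding bst_def by (rule Min_eqI) auto

lemma bst_props: "finite D \<Longrightarrow> y0 \<in> D \<Longrightarrow> bet D < fst y0 \<Longrightarrow>
   (\<exists>y\<in>D. bet D < fst y \<and> snd y = bst D) \<and> (\<forall>y\<in>D. bet D < fst y \<longrightarrow> bst D \<le> snd y)"
proof -
  assume a: "finite D" "y0 \<in> D" "bet D < fst y0"
  let ?A = "snd ` {y\<in>D. bet D < fst y}"
  have "finite ?A" using a by auto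
  have "?A \<noteq> {}" using a(2,3) by blast
  then have "Min ?A \<in> ?A" using \<open>finite ?A\<close> by (intro Min_in)
  moreover have "\<forall>y\<in>D. bet D < fst y \<longrightarrow> Min ?A \<le> snd y" using \<open>finite ?A\<close> by auto
  ultimately show ?thesis unfolding bst_def by force
qed

locale MMD =
  fixes m :: nat and D :: "(nat \<times> nat) set"
  assumes MM: "MM m D"
begin

lemma fin: "finite D" and sub: "D \<subseteq> Pm m" and ch: "chn D" and cv: "cov m D" and nesd: "\<not> esd D"
  using MM unfolding MM_def by auto

lemma ne: "D \<noteq> {}"
  using cv unfolding cov_def by auto

lemma bet_in: "\<exists>y\<in>D. snd y = bet D" and bet_le: "y \<in> D \<Longrightarrow> bet D \<le> snd y"
  using bet_props[OF fin ne] by auto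

lemma fs: "y \<in> D \<Longrightarrow> fst y \<le> snd y \<and> snd y \<le> m"
  using sub unfolding Pm_def by auto

lemma hi_ex: "\<exists>y\<in>D. bet D < fst y"
proof -
  obtain x y where "x \<in> D" "y \<in> D" "snd y < fst x" using nesd unfolding esd_def by force
  then show ?thesis using bet_le[of y] by force
qed

lemma bst_in: "\<exists>y\<in>D. bet D < fst y \<and> snd y = bst D"
  and bst_le: "y \<in> D \<Longrightarrow> bet D < fst y \<Longrightarrow> bst D \<le> snd y"
  using hi_ex bst_props[OF fin] by blast+

lemma bet_lt_bst: "bet D < bst D"
  using bst_in fs by fastforce

lemma bst_le_m: "bst D \<le> m"
  using bst_in fs by fastforce

lemma zz_Pm: "zz D \<in> Pm m"
  using bet_lt_bst bst_le_m unfolding zz_def Pm_def by simp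

lemma zz_low: assumes "y \<in> D" "fst y \<le> bet D" shows "ple y (zz D)"
proof -
  obtain y0 where y0: "y0 \<in> D" "bet D < fst y0" "snd y0 = bst D" using bst_in by blast
  have "ple y y0 \<or> ple y0 y" using ch assms(1) y0(1) unfolding chn_def by blast
  then have "ple y y0" using assms(2) y0(2) unfolding ple_def by auto
  then show ?thesis using assms(2) y0(3) unfolding ple_def zz_def by simp
qed

lemma zz_high: assumes "y \<in> D" "bet D < fst y" shows "ple (zz D) y" "zz D \<noteq> y"
  using assms bst_le unfolding ple_def zz_def by auto

lemma ple_refl: "ple a a" unfolding ple_def by simp

lemma chn_ins: "chn (insert (zz D) D)"
  unfolding chn_def
proof (intro ballI)
  fix x y assume x: "x \<in> insert (zz D) D" and y: "y \<in> insert (zz D) D"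
  have h: "\<And>y. y \<in> D \<Longrightarrow> ple y (zz D) \<or> ple (zz D) y"
    using zz_low zz_high by (meson not_le)
  show "ple x y \<or> ple y x"
  proof (cases "x = zz D")
    case True
    then show ?thesis
    proof (cases "y = zz D")
      case True then show ?thesis using \<open>x = zz D\<close> ple_refl by simp
    next
      case False then have "y \<in> D" using y by simp
      then show ?thesis using h[of y] \<open>x = zz D\<close> by blast
    qed
  next
    case False then have xD: "x \<in> D" using x by simp
    show ?thesis
    proof (cases "y = zz D")
      case True then show ?thesis using h[OF xD] by blast
    next
      case False then have "y \<in> D" using y by simp
      then show ?thesis using ch xD unfolding chn_def by blast
    qed
  qed
qed

lemma ins_props:
  assumes "zz D \<notin> D"
  shows "MM m (insert (zz D) D)" "bet (insert (zz D) D) = bet D" "zz (insert (zz D) D) = zz D"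
proof -
  let ?C = "insert (zz D) D"
  have finC: "finite ?C" using fin by simp
  show bC: "bet ?C = bet D"
  proof -
    obtain y where y: "y \<in> D" "snd y = bet D" using bet_in by blast
    show ?thesis
      by (rule bet_eqI[OF finC, of y]) (use y bet_le bet_lt_bst in \<open>auto simp: zz_def\<close>)
  qed
  show "MM m ?C"
    unfolding MM_def using fin sub zz_Pm chn_ins cv nesd
    unfolding cov_def esd_def by blast
  show "zz ?C = zz D"
  proof -
    obtain y0 where y0: "y0 \<in> D" "bet D < fst y0" "snd y0 = bst D" using bst_in by blast
    have "bst ?C = bst D"
      by (rule bst_eqI[OF finC, of y0]) (use y0 bC bst_le in \<open>auto simp: zz_def\<close>)
    then show ?thesis using bC unfolding zz_def by simp
  qed
qed

end

lemma TT_MM: "C \<in> TT m \<Longrightarrow> MMD m C"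
  unfolding TT_def MMD_def by simp

lemma del_props:
  assumes C: "C \<in> TT m"
  shows "MM m (C - {zz C})" "zz (C - {zz C}) = zz C" "bet (C - {zz C}) = bet C"
proof -
  interpret MMD m C using TT_MM[OF C] .
  let ?z = "zz C" and ?D = "C - {zz C}"
  have finD: "finite ?D" using fin by simp
  obtain yb where yb: "yb \<in> C" "snd yb = bet C" using bet_in by blast
  have ybz: "yb \<noteq> ?z" using yb bet_lt_bst unfolding zz_def by auto
  obtain y0 where y0: "y0 \<in> C" "bet C < fst y0" "snd y0 = bst C" using bst_in by blast
  have y0z: "y0 \<noteq> ?z" using y0 unfolding zz_def by auto
  show bD: "bet ?D = bet C"
    by (rule bet_eqI[OF finD, of yb]) (use yb ybz bet_le in auto)
  have "bst ?D = bst C"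
    by (rule bst_eqI[OF finD, of y0]) (use y0 y0z bD bst_le in auto)
  then show "zz ?D = zz C" using bD unfolding zz_def by simp
  have cvD: "cov m ?D"
    unfolding cov_def
  proof (intro allI impI)
    fix v assume "v \<le> m"
    then obtain y where y: "y \<in> C" "fst y = v \<or> snd y = v" using cv unfolding cov_def by blast
    show "\<exists>y\<in>?D. fst y = v \<or> snd y = v"
    proof (cases "y = ?z")
      case False then show ?thesis using y by blast
    next
      case True
      then have "v = bet C \<or> v = bst C" using y unfolding zz_def by auto
      then show ?thesis using yb ybz y0 y0z by blast
    qed
  qed
  have "\<not> esd ?D" unfolding esd_def using yb ybz y0 y0z by force
  then show "MM m ?D" unfolding MM_def using fin sub ch cvD unfolding chn_def by blast
qed

lemma TT_ab:
  assumes C: "C \<in> TT m"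
  shows "\<exists>a\<in>C. a < zz C" "\<exists>b\<in>C. zz C < b"
proof -
  interpret MMD m C using TT_MM[OF C] .
  obtain yb where yb: "yb \<in> C" "snd yb = bet C" using bet_in by blast
  have "ple yb (zz C)" using zz_low[OF yb(1)] yb fs[OF yb(1)] by simp
  moreover have "yb \<noteq> zz C" using yb bet_lt_bst unfolding zz_def by auto
  ultimately have "yb < zz C" using ple_lex by (simp add: order.strict_iff_order)
  then show "\<exists>a\<in>C. a < zz C" using yb by blast
  obtain y0 where y0: "y0 \<in> C" "bet C < fst y0" using hi_ex by blast
  have "zz C < y0" using zz_high[OF y0] ple_lex by (simp add: order.strict_iff_order)
  then show "\<exists>b\<in>C. zz C < b" using y0 by blast
qed

lemma key_faces:
  assumes C: "C \<in> TT m" and x: "x \<in> C" "x \<noteq> zz C"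
    and nK: "C - {x} \<notin> Kf m" and nz: "zz (C - {x}) \<notin> C - {x}"
  shows "MM m (C - {x}) \<and> rk m (insert (zz (C - {x})) (C - {x})) < rk m C"
proof -
  interpret MMD m C using TT_MM[OF C] .
  let ?D = "C - {x}"
  have MD: "MM m ?D" using nK fin sub ch unfolding MM_def Kf_def chn_def by auto
  interpret Dm: MMD m ?D using MD by (simp add: MMD_def)
  let ?C' = "insert (zz ?D) ?D"
  have cardD: "card ?D = card C - 1" using fin x by simp
  have cC: "card C > 0" using fin x by (auto simp: card_gt_0_iff)
  have cardC': "card ?C' = card C" using nz cardD cC Dm.fin by simp
  have bC': "bet ?C' = bet ?D" using Dm.ins_props(2)[OF nz] .
  have bCD: "bet C \<le> bet ?D" using Dm.bet_in bet_le by force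
  have bDm: "bet ?D \<le> m" using Dm.bet_in Dm.fs by fastforce
  show ?thesis
  proof (cases "bet C < bet ?D")
    case True
    then show ?thesis using MD cardC' bC' bDm unfolding rk_def by auto
  next
    case False
    then have be: "bet ?D = bet C" using bCD by simp
    have fx: "bet C < fst x"
    proof (rule ccontr)
      assume "\<not> bet C < fst x"
      then have "{y\<in>?D. bet ?D < fst y} = {y\<in>C. bet C < fst y}" using be by auto
      then have "bst ?D = bst C" unfolding bst_def using be by simp
      then have "zz ?D = zz C" unfolding zz_def using be by simp
      then show False using nz x TT_def C by auto
    qed
    have "{y\<in>?C'. fst y \<le> bet ?C'} = insert (zz ?D) {y\<in>C. fst y \<le> bet C}"
      using bC' be fx unfolding zz_def by auto
    moreover have "zz ?D \<notin> {y\<in>C. fst y \<le> bet C}"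
    proof
      assume "zz ?D \<in> {y\<in>C. fst y \<le> bet C}"
      then have "zz ?D \<in> C" by simp
      moreover have "zz ?D \<noteq> x"
      proof
        assume "zz ?D = x"
        then have "fst x = bet C" using be unfolding zz_def by (metis fst_conv)
        then show False using fx by simp
      qed
      ultimately show False using nz by simp
    qed
    ultimately have "rr ?C' = Suc (rr C)" unfolding rr_def using fin by simp
    moreover have "rr ?C' \<le> card ?C'" unfolding rr_def using Dm.fin by (intro card_mono) auto
    ultimately show ?thesis using MD cardC' bC' be unfolding rk_def by auto
  qed
qed


lemma face_MM: "C \<in> TT m \<Longrightarrow> C - {x} \<notin> Kf m \<Longrightarrow> MM m (C - {x})"
  unfolding TT_def MM_def Kf_def chn_def by auto

lemma finite_Pm: "finite (Pm m)"
proof -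
  have "Pm m \<subseteq> {0..m} \<times> {0..m}" unfolding Pm_def by auto
  then show ?thesis by (rule finite_subset) simp
qed

lemma finite_TT: "finite (TT m)"
proof -
  have "TT m \<subseteq> Pow (Pm m)" unfolding TT_def MM_def by auto
  then show ?thesis using finite_Pm by (simp add: finite_subset)
qed

lemma MM_notK: "MM m D \<Longrightarrow> D \<notin> Kf m"
  unfolding MM_def Kf_def by auto

lemma rk_card: "card C < card C' \<Longrightarrow> rk m C < rk m C'"
  unfolding rk_def by simp

lemma fill_all:
  assumes fib: "inner_fibration E B p"
    and f: "natS E (simpS m (Kf m)) f"
    and g: "natS B (simpS m UNIV) g"
    and pf: "\<And>k \<sigma>. (k, \<sigma>) \<in> simpS m (Kf m) \<Longrightarrow> p k (f k \<sigma>) = g k \<sigma>"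
  shows "\<exists>F. natS E (simpS m UNIV) F \<and> (\<forall>k \<sigma>. (k, \<sigma>) \<in> simpS m (Kf m) \<longrightarrow> F k \<sigma> = f k \<sigma>)
           \<and> (\<forall>k \<sigma>. (k, \<sigma>) \<in> simpS m UNIV \<longrightarrow> p k (F k \<sigma>) = g k \<sigma>)"
proof -
  define Sf where "Sf A = Kf m \<union> (\<Union>C\<in>A. Pow C)" for A
  define P where "P A \<longleftrightarrow> (\<exists>f'. natS E (simpS m (Sf A)) f' \<and> (\<forall>k \<sigma>. (k, \<sigma>) \<in> simpS m (Kf m) \<longrightarrow> f' k \<sigma> = f k \<sigma>)
           \<and> (\<forall>k \<sigma>. (k, \<sigma>) \<in> simpS m (Sf A) \<longrightarrow> p k (f' k \<sigma>) = g k \<sigma>))" for A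
  have dcS: "D \<in> Sf A \<Longrightarrow> D' \<subseteq> D \<Longrightarrow> D' \<in> Sf A" for A D D'
    unfolding Sf_def using Kf_dc by blast
  have ind: "A \<subseteq> TT m \<Longrightarrow> (\<forall>C\<in>A. \<forall>C'\<in>TT m. rk m C' < rk m C \<longrightarrow> C' \<in> A) \<Longrightarrow> P A" for A
  proof (induction "card A" arbitrary: A rule: less_induct)
    case less
    have finA: "finite A" using less.prems(1) finite_TT finite_subset by blast
    show ?case
    proof (cases "A = {}")
      case True
      then have "Sf A = Kf m" unfolding Sf_def by simp
      then show ?thesis unfolding P_def using f pf by auto
    next
      case False
      have "Max (rk m ` A) \<in> rk m ` A" using finA False by (intro Max_in) auto
      then obtain C where C: "C \<in> A" "rk m C = Max (rk m ` A)" by auto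
      have Cmax: "\<And>C'. C' \<in> A \<Longrightarrow> rk m C' \<le> rk m C" using C(2) finA by simp
      have CT: "C \<in> TT m" using C(1) less.prems(1) by blast
      define A' where "A' = A - {C}"
      have "card A > 0" using C(1) finA by (auto simp: card_gt_0_iff)
      then have cA': "card A' < card A" unfolding A'_def using C(1) finA by simp
      have A'T: "A' \<subseteq> TT m" using less.prems(1) A'_def by blast
      have A'cl: "\<forall>C1\<in>A'. \<forall>C'\<in>TT m. rk m C' < rk m C1 \<longrightarrow> C' \<in> A'"
      proof (intro ballI impI)
        fix C1 C' assume a: "C1 \<in> A'" "C' \<in> TT m" "rk m C' < rk m C1"
        then have "C' \<in> A" using less.prems(2) A'_def by blast
        moreover have "rk m C1 \<le> rk m C" using Cmax a(1) A'_def by blast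
        then have "C' \<noteq> C" using a(3) by auto
        ultimately show "C' \<in> A'" unfolding A'_def by blast
      qed
      have "P A'" using less.hyps[OF cA' A'T A'cl] .
      then obtain f1 where f1: "natS E (simpS m (Sf A')) f1"
        "\<And>k \<sigma>. (k, \<sigma>) \<in> simpS m (Kf m) \<Longrightarrow> f1 k \<sigma> = f k \<sigma>"
        "\<And>k \<sigma>. (k, \<sigma>) \<in> simpS m (Sf A') \<Longrightarrow> p k (f1 k \<sigma>) = g k \<sigma>"
        unfolding P_def by blast
      interpret MMD m C using TT_MM[OF CT] .
      interpret chainC C m using fin ne sub ch by unfold_locales
      obtain a b where ab: "a \<in> C" "a < zz C" "b \<in> C" "zz C < b" using TT_ab[OF CT] by blast
      have zC: "zz C \<in> C" using CT unfolding TT_def by simp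
      have faces: "C - {x} \<in> Sf A'" if x: "x \<in> C" "x \<noteq> zz C" for x
      proof (cases "C - {x} \<in> Kf m")
        case True then show ?thesis unfolding Sf_def by blast
      next
        case nK: False
        show ?thesis
        proof (cases "zz (C - {x}) \<in> C - {x}")
          case True
          then have DT: "C - {x} \<in> TT m" using face_MM[OF CT nK] unfolding TT_def by simp
          have "card (C - {x}) < card C" using fin x(1) by (meson card_Diff1_less)
          then have "rk m (C - {x}) < rk m C" by (rule rk_card)
          then have "C - {x} \<in> A" using less.prems(2) C(1) DT by blast
          moreover have "C - {x} \<noteq> C" using x(1) by blast
          ultimately show ?thesis unfolding Sf_def A'_def by blast
        next
          case False
          let ?D = "C - {x}"
          have kf: "MM m ?D \<and> rk m (insert (zz ?D) ?D) < rk m C"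
            using key_faces[OF CT x nK False] .
          interpret Dm: MMD m ?D using kf by (simp add: MMD_def)
          have "insert (zz ?D) ?D \<in> TT m" using Dm.ins_props[OF False] unfolding TT_def by simp
          then have "insert (zz ?D) ?D \<in> A" using less.prems(2) C(1) kf by blast
          moreover have "insert (zz ?D) ?D \<noteq> C" using kf by auto
          ultimately show ?thesis unfolding Sf_def A'_def by blast
        qed
      qed
      have nz: "C - {zz C} \<notin> Sf A'"
      proof
        assume a: "C - {zz C} \<in> Sf A'"
        let ?D0 = "C - {zz C}"
        have MD0: "MM m ?D0" and zD0: "zz ?D0 = zz C" using del_props[OF CT] by auto
        then have "?D0 \<notin> Kf m" using MM_notK by blast
        then obtain C1 where C1: "C1 \<in> A'" "?D0 \<subseteq> C1" using a unfolding Sf_def by blast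
        have C1T: "C1 \<in> TT m" using C1(1) A'T by blast
        have C1C: "C1 \<noteq> C" "rk m C1 \<le> rk m C" using C1(1) Cmax unfolding A'_def by auto
        interpret C1m: MMD m C1 using TT_MM[OF C1T] .
        have cD0: "card ?D0 = card C - 1" using fin zC by simp
        have cC: "card C > 0" using fin zC by (auto simp: card_gt_0_iff)
        have "card ?D0 \<le> card C1" using card_mono[OF C1m.fin C1(2)] .
        moreover have "\<not> card C < card C1" using rk_card[of C C1 m] C1C(2) by auto
        ultimately have "card C1 = card C - 1 \<or> card C1 = card C" using cD0 by linarith
        then show False
        proof
          assume "card C1 = card C - 1"
          then have "?D0 = C1" using card_subset_eq[OF C1m.fin C1(2)] cD0 by simp
          then show False using C1T zD0 unfolding TT_def by auto
        next
          assume cc: "card C1 = card C"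
          have "card (C1 - ?D0) = 1" using card_Diff_subset[OF _ C1(2)] fin cc cD0 cC by simp
          then obtain x' where x': "C1 - ?D0 = {x'}" using card_1_singletonE by blast
          have C1eq: "C1 = insert x' ?D0" using x' C1(2) by blast
          have x'D0: "x' \<notin> ?D0" using x' by blast
          have x'z: "x' \<noteq> zz C" using C1eq C1C(1) zC by (metis insert_Diff)
          have D0eq: "?D0 = C1 - {x'}" using C1eq x'D0 by blast
          show False
          proof (cases "x' = zz C1")
            case True
            then have "zz (C1 - {zz C1}) = zz C1" using del_props(2)[OF C1T] by simp
            then have "zz ?D0 = x'" using D0eq True by simp
            then show False using zD0 x'z by simp
          next
            case False
            have x'C1: "x' \<in> C1" using C1eq by blast
            have nK1: "C1 - {x'} \<notin> Kf m" using D0eq MM_notK[OF MD0] by simp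
            have nz1: "zz (C1 - {x'}) \<notin> C1 - {x'}" using D0eq zD0 by auto
            have "rk m (insert (zz (C1 - {x'})) (C1 - {x'})) < rk m C1"
              using key_faces[OF C1T x'C1 False nK1 nz1] by blast
            moreover have "insert (zz (C1 - {x'})) (C1 - {x'}) = C"
            proof -
              have e1: "C1 - {x'} = ?D0" using D0eq by simp
              have "insert (zz (C1 - {x'})) (C1 - {x'}) = insert (zz C) ?D0" unfolding e1 zD0 ..
              also have "\<dots> = C" using zC by blast
              finally show ?thesis .
            qed
            ultimately show False using C1C(2) by simp
          qed
        qed
      qed
      have dc': "\<And>D D'. D \<in> Sf A' \<Longrightarrow> D' \<subseteq> D \<Longrightarrow> D' \<in> Sf A'" using dcS by blast
      have "\<exists>f'. natS E (simpS m (Sf A' \<union> Pow C)) f' \<and> (\<forall>k \<sigma>. (k, \<sigma>) \<in> simpS m (Sf A') \<longrightarrow> f' k \<sigma> = f1 k \<sigma>)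
           \<and> (\<forall>k \<sigma>. (k, \<sigma>) \<in> simpS m (Sf A' \<union> Pow C) \<longrightarrow> p k (f' k \<sigma>) = g k \<sigma>)"
      proof (rule horn_step[where F="Sf A'" and z="zz C" and a=a and b=b and f=f1 and g=g])
        show "inner_fibration E B p" by (rule fib)
        show "\<And>D D'. D \<in> Sf A' \<Longrightarrow> D' \<subseteq> D \<Longrightarrow> D' \<in> Sf A'" by (rule dcS)
        show "zz C \<in> C" "a \<in> C" "a < zz C" "b \<in> C" "zz C < b" using zC ab by auto
        show "\<And>x. x \<in> C \<Longrightarrow> x \<noteq> zz C \<Longrightarrow> C - {x} \<in> Sf A'" by (rule faces)
        show "C - {zz C} \<notin> Sf A'" by (rule nz)
        show "natS E (simpS m (Sf A')) f1" by (rule f1(1))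
        show "natS B (simpS m UNIV) g" by (rule g)
        show "\<And>k \<sigma>. (k, \<sigma>) \<in> simpS m (Sf A') \<Longrightarrow> p k (f1 k \<sigma>) = g k \<sigma>" by (rule f1(3))
      qed
      then obtain f' where f': "natS E (simpS m (Sf A' \<union> Pow C)) f'"
        "\<forall>k \<sigma>. (k, \<sigma>) \<in> simpS m (Sf A') \<longrightarrow> f' k \<sigma> = f1 k \<sigma>"
        "\<forall>k \<sigma>. (k, \<sigma>) \<in> simpS m (Sf A' \<union> Pow C) \<longrightarrow> p k (f' k \<sigma>) = g k \<sigma>"
        by blast
      have SA: "Sf A' \<union> Pow C = Sf A" unfolding Sf_def A'_def using C(1) by blast
      have KS: "simpS m (Kf m) \<subseteq> simpS m (Sf A')" unfolding simpS_def Sf_def by auto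
      have agree: "\<forall>k \<sigma>. (k, \<sigma>) \<in> simpS m (Kf m) \<longrightarrow> f' k \<sigma> = f k \<sigma>"
      proof (intro allI impI)
        fix k \<sigma> assume a: "(k, \<sigma>) \<in> simpS m (Kf m)"
        then have "(k, \<sigma>) \<in> simpS m (Sf A')" using KS by blast
        then show "f' k \<sigma> = f k \<sigma>" using f'(2) f1(2)[OF a] by simp
      qed
      have f'1: "natS E (simpS m (Sf A)) f'" using f'(1) unfolding SA .
      have f'3: "\<forall>k \<sigma>. (k, \<sigma>) \<in> simpS m (Sf A) \<longrightarrow> p k (f' k \<sigma>) = g k \<sigma>" using f'(3) unfolding SA .
      show ?thesis unfolding P_def using f'1 agree f'3 by blast
    qed
  qed
  have "P (TT m)" by (rule ind) auto
  moreover have "simpS m (Sf (TT m)) = simpS m UNIV"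
  proof -
    have "im k \<sigma> \<in> Sf (TT m)" if ns: "nsimp k m \<sigma>" for k \<sigma>
    proof (cases "im k \<sigma> \<in> Kf m")
      case True then show ?thesis unfolding Sf_def by blast
    next
      case False
      let ?D = "im k \<sigma>"
      have MD: "MM m ?D" using False nsimp_im_Pm[OF ns] nsimp_im_chn[OF ns]
        unfolding MM_def Kf_def im_def by auto
      interpret Dm: MMD m ?D using MD by (simp add: MMD_def)
      show ?thesis
      proof (cases "zz ?D \<in> ?D")
        case True then have "?D \<in> TT m" using MD unfolding TT_def by simp
        then show ?thesis unfolding Sf_def by blast
      next
        case False then have "insert (zz ?D) ?D \<in> TT m" using Dm.ins_props unfolding TT_def by simp
        then show ?thesis unfolding Sf_def by blast
      qed
    qed
    then show ?thesis unfolding simpS_def by auto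
  qed
  ultimately show ?thesis unfolding P_def by simp
qed


definition iota :: "nat \<Rightarrow> nat \<Rightarrow> nat \<times> nat" where
  "iota k = (\<lambda>i. if i \<le> k then (i, k + 1 + i) else (0, 0))"

definition vals :: "nat \<Rightarrow> (nat \<Rightarrow> nat \<times> nat) \<Rightarrow> nat set" where
  "vals k \<sigma> = fst ` im k \<sigma> \<union> snd ` im k \<sigma>"

lemma nsimp_post: "nsimp k m \<sigma> \<Longrightarrow> mor m m' \<alpha> \<Longrightarrow> nsimp k m' (post k \<alpha> \<sigma>)"
  unfolding nsimp_def post_def mor_def by (auto simp: le_trans)

lemma post_post: "nsimp k m \<sigma> \<Longrightarrow> post k \<alpha> (post k \<beta> \<sigma>) = post k (cmp m \<alpha> \<beta>) \<sigma>"
  by (rule ext) (auto simp: post_def cmp_def nsimp_def)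

lemma pre_post: "mor j k \<beta> \<Longrightarrow> pre j \<beta> (post k \<alpha> \<sigma>) = post j \<alpha> (pre j \<beta> \<sigma>)"
  by (rule ext) (auto simp: pre_def post_def mor_def)

lemma post_idm: "nsimp k m \<sigma> \<Longrightarrow> post k (idm m) \<sigma> = \<sigma>"
  by (rule ext) (auto simp: post_def idm_def nsimp_def)

lemma nsimp_iota: "nsimp k (2 * k + 1) (iota k)"
  unfolding nsimp_def iota_def by auto

lemma mor_js: assumes "mor n m \<alpha>" shows "mor (2 * n + 1) (2 * m + 1) (join_self n m \<alpha>)"
  unfolding mor_def join_self_def
proof (intro conjI allI impI)
  fix i assume "i \<le> 2 * n + 1"
  then show "(if i \<le> n then \<alpha> i else if i \<le> 2 * n + 1 then m + 1 + \<alpha> (i - (n + 1)) else 0) \<le> 2 * m + 1"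
    using mor_le[OF assms, of i] mor_le[OF assms, of "i - (n + 1)"] by auto
next
  fix i j assume a: "i \<le> j \<and> j \<le> 2 * n + 1"
  then show "(if i \<le> n then \<alpha> i else if i \<le> 2 * n + 1 then m + 1 + \<alpha> (i - (n + 1)) else 0)
      \<le> (if j \<le> n then \<alpha> j else if j \<le> 2 * n + 1 then m + 1 + \<alpha> (j - (n + 1)) else 0)"
    using mor_mono[OF assms, of i j] mor_mono[OF assms, of "i - (n + 1)" "j - (n + 1)"]
      mor_le[OF assms, of i] by auto
qed auto

lemma post_js_iota: "mor n m \<alpha> \<Longrightarrow> post n (join_self n m \<alpha>) (iota n) = pre n \<alpha> (iota m)"
  by (rule ext) (auto simp: post_def join_self_def iota_def pre_def mor_def)

lemma pre_post_iota:
  assumes "mor l k \<beta>" "mor (2 * k + 1) m s"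
  shows "pre l \<beta> (post k s (iota k)) = post l (cmp (2 * l + 1) s (join_self l k \<beta>)) (iota l)"
proof -
  have "post l (cmp (2 * l + 1) s (join_self l k \<beta>)) (iota l) = post l s (post l (join_self l k \<beta>) (iota l))"
    using post_post[OF nsimp_iota] by simp
  also have "\<dots> = post l s (pre l \<beta> (iota k))" using post_js_iota[OF assms(1)] by simp
  also have "\<dots> = pre l \<beta> (post k s (iota k))" using pre_post[OF assms(1)] by simp
  finally show ?thesis by simp
qed

section \<open>The coend relation\<close>

lemma coend_eq_refl: "coend_eq X k a a"
  unfolding coend_eq_def by simp

lemma coend_eq_sym: "coend_eq X k a b \<Longrightarrow> coend_eq X k b a"
  unfolding coend_eq_def
proof (induction rule: rtranclp_induct)
  case base then show ?case by simp
next
  case (step y z)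
  then have "(\<lambda>s t. coend_step X k s t \<or> coend_step X k t s) z y" by blast
  then show ?case using step.IH by (rule converse_rtranclp_into_rtranclp)
qed

lemma coend_eq_trans: "coend_eq X k a b \<Longrightarrow> coend_eq X k b c \<Longrightarrow> coend_eq X k a c"
  unfolding coend_eq_def by simp

lemma eclass_eq: "coend_eq X k a b \<Longrightarrow> eclass X k a = eclass X k b"
  unfolding eclass_def using coend_eq_sym coend_eq_trans by blast

lemma step_eq:
  assumes "mor m m' \<alpha>" "x \<in> sc X m'" "nsimp k m \<sigma>"
  shows "eclass X k (m, sm X m m' \<alpha> x, \<sigma>) = eclass X k (m', x, post k \<alpha> \<sigma>)"
proof -
  have "coend_step X k (m, sm X m m' \<alpha> x, \<sigma>) (m', x, post k \<alpha> \<sigma>)"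
    unfolding coend_step_def using assms by blast
  then have "coend_eq X k (m, sm X m m' \<alpha> x, \<sigma>) (m', x, post k \<alpha> \<sigma>)"
    unfolding coend_eq_def by (simp add: r_into_rtranclp)
  then show ?thesis by (rule eclass_eq)
qed

definition apre :: "nat \<Rightarrow> (nat \<Rightarrow> nat) \<Rightarrow> 'a etriple \<Rightarrow> 'a etriple" where
  "apre n \<beta> t = (case t of (m, x, \<sigma>) \<Rightarrow> (m, x, pre n \<beta> \<sigma>))"

lemma coend_step_pre:
  assumes X: "sset X" and \<beta>: "mor n k \<beta>" and st: "coend_step X k s t"
  shows "coend_step X n (apre n \<beta> s) (apre n \<beta> t)"
proof -
  from st obtain m m' \<alpha> x \<sigma> where a: "mor m m' \<alpha>" "x \<in> sc X m'" "nsimp k m \<sigma>"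
    "s = (m, sm X m m' \<alpha> x, \<sigma>)" "t = (m', x, post k \<alpha> \<sigma>)"
    unfolding coend_step_def by blast
  have "apre n \<beta> t = (m', x, post n \<alpha> (pre n \<beta> \<sigma>))"
    using a(5) pre_post[OF \<beta>] unfolding apre_def by simp
  moreover have "apre n \<beta> s = (m, sm X m m' \<alpha> x, pre n \<beta> \<sigma>)" using a(4) unfolding apre_def by simp
  moreover have "nsimp n m (pre n \<beta> \<sigma>)" using nsimp_pre[OF a(3) \<beta>] .
  ultimately show ?thesis unfolding coend_step_def using a(1,2) by blast
qed

lemma coend_eq_pre:
  assumes X: "sset X" and \<beta>: "mor n k \<beta>"
  shows "coend_eq X k a b \<Longrightarrow> coend_eq X n (apre n \<beta> a) (apre n \<beta> b)"
  unfolding coend_eq_def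
proof (induction rule: rtranclp_induct)
  case base then show ?case by simp
next
  case (step y z)
  then have "coend_step X n (apre n \<beta> y) (apre n \<beta> z) \<or> coend_step X n (apre n \<beta> z) (apre n \<beta> y)"
    using coend_step_pre[OF X \<beta>] by blast
  then have "(\<lambda>s t. coend_step X n s t \<or> coend_step X n t s) (apre n \<beta> y) (apre n \<beta> z)" by blast
  with step.IH show ?case by (rule rtranclp.rtrancl_into_rtrancl)
qed

lemma eclass_self: "t \<in> etriples X k \<Longrightarrow> t \<in> eclass X k t"
  unfolding eclass_def by (simp add: coend_eq_refl)

lemma sm_ESd'_eclass:
  assumes X: "sset X" and t: "t \<in> etriples X k" and \<beta>: "mor l k \<beta>"
  shows "sm (ESd' X) l k \<beta> (eclass X k t) = eclass X l (apre l \<beta> t)"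
proof -
  define t' where "t' = (SOME t'. t' \<in> eclass X k t)"
  have "t' \<in> eclass X k t" unfolding t'_def using eclass_self[OF t] by (rule someI)
  then have ce: "coend_eq X k t t'" unfolding eclass_def by simp
  obtain m' x' \<sigma>' where t'eq: "t' = (m', x', \<sigma>')" by (cases t') auto
  have "sm (ESd' X) l k \<beta> (eclass X k t) = eclass X l (m', x', pre l \<beta> \<sigma>')"
    unfolding ESd'_def by (simp add: t'_def[symmetric] t'eq)
  also have "\<dots> = eclass X l (apre l \<beta> t')" unfolding apre_def t'eq by simp
  also have "\<dots> = eclass X l (apre l \<beta> t)"
    using eclass_eq[OF coend_eq_pre[OF X \<beta> ce]] by simp
  finally show ?thesis .
qed

lemma etriplesI: "x \<in> sc X m \<Longrightarrow> nsimp k m \<sigma> \<Longrightarrow> (m, x, \<sigma>) \<in> etriples X k"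
  unfolding etriples_def by simp

lemma canon_eq: "canon X k y = eclass X k (2 * k + 1, y, iota k)"
  unfolding canon_def iota_def by simp

theorem canon_sset_map:
  assumes X: "sset X"
  shows "sset_map (ESd X) (ESd' X) (canon X)"
  unfolding sset_map_def
proof (intro conjI allI impI)
  fix n x assume "x \<in> sc (ESd X) n"
  then have "x \<in> sc X (2 * n + 1)" unfolding ESd_def by simp
  then have "(2 * n + 1, x, iota n) \<in> etriples X n" by (rule etriplesI[OF _ nsimp_iota])
  then show "canon X n x \<in> sc (ESd' X) n"
    unfolding canon_eq using imageI[of _ _ "eclass X n"] unfolding ESd'_def by simp
next
  fix n m \<alpha> x assume a: "mor n m \<alpha> \<and> x \<in> sc (ESd X) m"
  then have \<alpha>: "mor n m \<alpha>" and x: "x \<in> sc X (2 * m + 1)" unfolding ESd_def by auto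
  have "canon X n (sm (ESd X) n m \<alpha> x) = eclass X n (2 * n + 1, sm X (2 * n + 1) (2 * m + 1) (join_self n m \<alpha>) x, iota n)"
    unfolding canon_eq ESd_def by simp
  also have "\<dots> = eclass X n (2 * m + 1, x, post n (join_self n m \<alpha>) (iota n))"
    by (rule step_eq[OF mor_js[OF \<alpha>] x nsimp_iota])
  also have "\<dots> = eclass X n (apre n \<alpha> (2 * m + 1, x, iota m))"
    unfolding apre_def using post_js_iota[OF \<alpha>] by simp
  also have "\<dots> = sm (ESd' X) n m \<alpha> (canon X m x)"
    unfolding canon_eq using sm_ESd'_eclass[OF X etriplesI[OF x nsimp_iota] \<alpha>] by simp
  finally show "canon X n (sm (ESd X) n m \<alpha> x) = sm (ESd' X) n m \<alpha> (canon X m x)" .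
qed


lemma vals_post: "vals k (post k h \<sigma>) = h ` vals k \<sigma>"
  unfolding vals_def im_def post_def by force

lemma vals_sub: "nsimp k m \<sigma> \<Longrightarrow> vals k \<sigma> \<subseteq> {0..m}"
  unfolding vals_def im_def nsimp_def by force

lemma cov_vals: "cov m (im k \<sigma>) \<longleftrightarrow> {0..m} \<subseteq> vals k \<sigma>"
  unfolding cov_def vals_def by force

lemma vals_cov_eq: "nsimp k r \<sigma> \<Longrightarrow> cov r (im k \<sigma>) \<Longrightarrow> vals k \<sigma> = {0..r}"
  using vals_sub cov_vals by blast

lemma finite_vals: "finite (vals k \<sigma>)"
  unfolding vals_def im_def by simp

lemma vals_ne: "vals k \<sigma> \<noteq> {}"
  unfolding vals_def im_def by auto

lemma val_factor:
  assumes ns: "nsimp k q \<sigma>"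
  shows "\<exists>r \<epsilon> \<sigma>''. imor r q \<epsilon> \<and> nsimp k r \<sigma>'' \<and> cov r (im k \<sigma>'') \<and> \<sigma> = post k \<epsilon> \<sigma>''"
proof -
  define V where "V = vals k \<sigma>"
  have fin: "finite V" and ne: "V \<noteq> {}" unfolding V_def using finite_vals vals_ne by auto
  then have "card V > 0" by (simp add: card_gt_0_iff)
  define r where "r = card V - 1"
  have cVr: "card V = Suc r" using \<open>card V > 0\<close> r_def by simp
  define \<epsilon> where "\<epsilon> = (\<lambda>i. if i \<le> r then en V i else 0)"
  define \<sigma>'' where "\<sigma>'' = (\<lambda>i. if i \<le> k then (ix V (fst (\<sigma> i)), ix V (snd (\<sigma> i))) else (0, 0))"
  have Vq: "V \<subseteq> {0..q}" unfolding V_def using vals_sub[OF ns] .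
  have inV: "i \<le> k \<Longrightarrow> fst (\<sigma> i) \<in> V \<and> snd (\<sigma> i) \<in> V" for i
    unfolding V_def vals_def im_def by auto
  have "imor r q \<epsilon>" unfolding imor_def mor_def \<epsilon>_def
    using en_in[OF fin] en_strict[OF fin] en_mono[OF fin] Vq cVr
    by (auto simp: less_Suc_eq_le subset_iff)
  moreover have "nsimp k r \<sigma>''"
    unfolding nsimp_def \<sigma>''_def
  proof (intro conjI allI impI)
    fix i assume i: "i \<le> k"
    show "fst (if i \<le> k then (ix V (fst (\<sigma> i)), ix V (snd (\<sigma> i))) else (0, 0))
        \<le> snd (if i \<le> k then (ix V (fst (\<sigma> i)), ix V (snd (\<sigma> i))) else (0, 0))"
      using i ix_mono[OF fin] ns unfolding nsimp_def by auto
    show "snd (if i \<le> k then (ix V (fst (\<sigma> i)), ix V (snd (\<sigma> i))) else (0, 0)) \<le> r"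
      using i ix_lt[OF fin] inV[OF i] cVr by fastforce
  next
    fix i j assume a: "i \<le> j \<and> j \<le> k"
    then have "fst (\<sigma> i) \<le> fst (\<sigma> j)" "snd (\<sigma> i) \<le> snd (\<sigma> j)" using ns unfolding nsimp_def by auto
    then show "fst (if i \<le> k then (ix V (fst (\<sigma> i)), ix V (snd (\<sigma> i))) else (0, 0))
        \<le> fst (if j \<le> k then (ix V (fst (\<sigma> j)), ix V (snd (\<sigma> j))) else (0, 0))"
      "snd (if i \<le> k then (ix V (fst (\<sigma> i)), ix V (snd (\<sigma> i))) else (0, 0))
        \<le> snd (if j \<le> k then (ix V (fst (\<sigma> j)), ix V (snd (\<sigma> j))) else (0, 0))"
      using a ix_mono[OF fin] by auto
  qed auto
  moreover have "cov r (im k \<sigma>'')"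
    unfolding cov_def
  proof (intro allI impI)
    fix v assume v: "v \<le> r"
    then have "en V v \<in> V" using en_in[OF fin] cVr by simp
    then obtain i where i: "i \<le> k" "fst (\<sigma> i) = en V v \<or> snd (\<sigma> i) = en V v"
      unfolding V_def vals_def im_def by auto
    have "ix V (en V v) = v" using ix_en[OF fin] v cVr by simp
    then have "fst (\<sigma>'' i) = v \<or> snd (\<sigma>'' i) = v" using i unfolding \<sigma>''_def by auto
    moreover have "\<sigma>'' i \<in> im k \<sigma>''" using i(1) unfolding im_def by auto
    ultimately show "\<exists>y\<in>im k \<sigma>''. fst y = v \<or> snd y = v" by blast
  qed
  moreover have "\<sigma> = post k \<epsilon> \<sigma>''"
  proof (rule ext)
    fix i show "\<sigma> i = post k \<epsilon> \<sigma>'' i"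
    proof (cases "i \<le> k")
      case True
      then have "ix V (fst (\<sigma> i)) \<le> r" "ix V (snd (\<sigma> i)) \<le> r"
        using ix_lt[OF fin] inV cVr by (simp_all add: less_Suc_eq_le)
      then show ?thesis using True en_ix[OF fin] inV[OF True]
        by (simp add: post_def \<epsilon>_def \<sigma>''_def prod_eq_iff)
    next
      case False then show ?thesis using ns by (simp add: post_def nsimp_def)
    qed
  qed
  ultimately show ?thesis by blast
qed

lemma post_inj:
  assumes \<delta>: "imor r m \<delta>" and s1: "nsimp k r \<sigma>1" and s2: "nsimp k r \<sigma>2"
    and eq: "post k \<delta> \<sigma>1 = post k \<delta> \<sigma>2"
  shows "\<sigma>1 = \<sigma>2"
proof (rule nsimp_eqI[OF s1 s2])
  fix i assume i: "i \<le> k"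
  have inj: "\<And>a b. a \<le> r \<Longrightarrow> b \<le> r \<Longrightarrow> \<delta> a = \<delta> b \<Longrightarrow> a = b"
    using \<delta> unfolding imor_def by (metis linorder_neqE_nat order_less_irrefl)
  have "\<delta> (fst (\<sigma>1 i)) = \<delta> (fst (\<sigma>2 i))" "\<delta> (snd (\<sigma>1 i)) = \<delta> (snd (\<sigma>2 i))"
    using fun_cong[OF eq, of i] i unfolding post_def by auto
  moreover have "fst (\<sigma>1 i) \<le> r" "snd (\<sigma>1 i) \<le> r" "fst (\<sigma>2 i) \<le> r" "snd (\<sigma>2 i) \<le> r"
    using s1 s2 i unfolding nsimp_def by (auto intro: le_trans)
  ultimately show "\<sigma>1 i = \<sigma>2 i" using inj by (simp add: prod_eq_iff)
qed

lemma noncov_post: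
  assumes "q' < m" "mor q' m \<alpha>" "nsimp k q' \<sigma>'"
  shows "\<not> cov m (im k (post k \<alpha> \<sigma>'))"
proof
  assume "cov m (im k (post k \<alpha> \<sigma>'))"
  then have "{0..m} \<subseteq> \<alpha> ` vals k \<sigma>'" using cov_vals vals_post by metis
  also have "\<dots> \<subseteq> \<alpha> ` {0..q'}" using vals_sub[OF assms(3)] by blast
  finally have "card {0..m} \<le> card (\<alpha> ` {0..q'})" by (intro card_mono) auto
  also have "\<dots> \<le> card {0..q'}" by (rule card_image_le) simp
  finally show False using assms(1) by simp
qed

lemma esd_post_iota: "mor (2 * k + 1) m s \<Longrightarrow> esd (im k (post k s (iota k)))"
  unfolding esd_def im_def post_def iota_def mor_def by auto

lemma esd_rep:
  assumes ns: "nsimp k m \<sigma>" and e: "esd (im k \<sigma>)"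
  shows "\<exists>s. mor (2 * k + 1) m s \<and> \<sigma> = post k s (iota k)"
proof -
  define s where "s = (\<lambda>i. if i \<le> k then fst (\<sigma> i) else if i \<le> 2 * k + 1 then snd (\<sigma> (i - (k + 1))) else 0)"
  have E: "i \<le> k \<Longrightarrow> j \<le> k \<Longrightarrow> fst (\<sigma> i) \<le> snd (\<sigma> j)" for i j
    using e unfolding esd_def im_def by auto
  have "mor (2 * k + 1) m s" unfolding mor_def s_def
  proof (intro conjI allI impI)
    fix i assume "i \<le> 2 * k + 1"
    then show "(if i \<le> k then fst (\<sigma> i) else if i \<le> 2 * k + 1 then snd (\<sigma> (i - (k + 1))) else 0) \<le> m"
      using ns unfolding nsimp_def by (auto intro: le_trans)
  next
    fix i j assume a: "i \<le> j \<and> j \<le> 2 * k + 1"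
    show "(if i \<le> k then fst (\<sigma> i) else if i \<le> 2 * k + 1 then snd (\<sigma> (i - (k + 1))) else 0)
        \<le> (if j \<le> k then fst (\<sigma> j) else if j \<le> 2 * k + 1 then snd (\<sigma> (j - (k + 1))) else 0)"
      using a E[of i "j - (k + 1)"] nsimp_ple[OF ns, of i j] nsimp_ple[OF ns, of "i - (k + 1)" "j - (k + 1)"]
      unfolding ple_def by auto
  qed auto
  moreover have "\<sigma> = post k s (iota k)"
    by (rule ext) (use ns in \<open>auto simp: post_def iota_def s_def nsimp_def\<close>)
  ultimately show ?thesis by blast
qed

lemma iota_rep_unique:
  assumes "mor (2 * k + 1) m s" "mor (2 * k + 1) m' s'" "post k s (iota k) = post k s' (iota k)"
  shows "s = s'"
proof (rule mor_eqI[OF assms(1,2)])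
  fix i assume i: "i \<le> 2 * k + 1"
  show "s i = s' i"
  proof (cases "i \<le> k")
    case True
    then show ?thesis using fun_cong[OF assms(3), of i] by (simp add: post_def iota_def)
  next
    case False
    then have "i - (k + 1) \<le> k" "k + 1 + (i - (k + 1)) = i" using i by auto
    then show ?thesis using fun_cong[OF assms(3), of "i - (k + 1)"] by (simp add: post_def iota_def)
  qed
qed

lemma vals_iota: "vals k (iota k) = {0..2 * k + 1}"
proof
  show "vals k (iota k) \<subseteq> {0..2 * k + 1}" using vals_sub[OF nsimp_iota] .
  show "{0..2 * k + 1} \<subseteq> vals k (iota k)"
  proof
    fix v assume v: "v \<in> {0..2 * k + 1}"
    show "v \<in> vals k (iota k)"
    proof (cases "v \<le> k")
      case True
      then have "iota k v \<in> im k (iota k)" unfolding im_def by auto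
      then show ?thesis using True unfolding vals_def iota_def by force
    next
      case False
      then have "iota k (v - (k + 1)) \<in> im k (iota k)" using v unfolding im_def by auto
      moreover have "snd (iota k (v - (k + 1))) = v" using False v unfolding iota_def by auto
      ultimately show ?thesis unfolding vals_def by force
    qed
  qed
qed

lemma esd_noncov_factor:
  assumes s: "mor (2 * k + 1) m s" and nc: "\<not> cov m (im k (post k s (iota k)))"
  shows "\<exists>r \<delta> e. r < m \<and> imor r m \<delta> \<and> mor (2 * k + 1) r e \<and> s = cmp (2 * k + 1) \<delta> e"
proof -
  obtain r e \<delta> where f: "smor (2 * k + 1) r e" "imor r m \<delta>" "s = cmp (2 * k + 1) \<delta> e"
    using mor_factor[OF s] by blast
  have "r \<le> m" using imor_le[OF f(2)] .
  moreover have "r \<noteq> m"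
  proof
    assume rm: "r = m"
    then have "\<delta> = idm m" using imor_endo f(2) by simp
    then have "s = e" using f(3) cmp_idm_left smor_mor[OF f(1)] rm by simp
    then have "s ` {0..2 * k + 1} = {0..m}" using smor_image f(1) rm by simp
    moreover have "vals k (post k s (iota k)) = s ` {0..2 * k + 1}" using vals_post[of k s "iota k"] vals_iota by simp
    ultimately have "cov m (im k (post k s (iota k)))" using cov_vals by simp
    then show False using nc by simp
  qed
  ultimately have "r < m" by simp
  then show ?thesis using f(2,3) smor_mor[OF f(1)] by blast
qed

section \<open>Eilenberg-Zilber decomposition as a function\<close>

definition ez :: "'a sset \<Rightarrow> nat \<Rightarrow> 'a \<Rightarrow> nat \<times> (nat \<Rightarrow> nat) \<times> 'a" where
  "ez X m x = (SOME t. case t of (q, s, y) \<Rightarrow> smor m q s \<and> nd X q y \<and> x = sm X m q s y)"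

lemma ez_prop:
  assumes "sset X" "x \<in> sc X m"
  shows "case ez X m x of (q, s, y) \<Rightarrow> smor m q s \<and> nd X q y \<and> x = sm X m q s y"
proof -
  obtain q s y where "smor m q s" "nd X q y" "x = sm X m q s y" using ez_exists[OF assms] by blast
  then have "\<exists>t. case t of (q, s, y) \<Rightarrow> smor m q s \<and> nd X q y \<and> x = sm X m q s y" by auto
  then show ?thesis unfolding ez_def by (rule someI_ex)
qed

lemma ez_char:
  assumes X: "sset X" and s: "smor m q s" and y: "nd X q y"
  shows "ez X m (sm X m q s y) = (q, s, y)"
proof -
  have ysc: "y \<in> sc X q" using y by (simp add: nd_def)
  have xsc: "sm X m q s y \<in> sc X m" using sset_sc[OF X smor_mor[OF s] ysc] .
  obtain q' s' y' where e: "ez X m (sm X m q s y) = (q', s', y')" by (cases "ez X m (sm X m q s y)") auto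
  have "smor m q' s' \<and> nd X q' y' \<and> sm X m q s y = sm X m q' s' y'" using ez_prop[OF X xsc] e by simp
  then have "q = q' \<and> s = s' \<and> y = y'" using ez_unique[OF X s y] by blast
  then show ?thesis using e by simp
qed

lemma nd_sc: "nd X q y \<Longrightarrow> y \<in> sc X q" by (simp add: nd_def)


locale mainctx =
  fixes X :: "'a sset" and E :: "'e sset" and B :: "'b sset"
    and p :: "nat \<Rightarrow> 'e \<Rightarrow> 'b" and u :: "nat \<Rightarrow> 'a \<Rightarrow> 'e" and v :: "nat \<Rightarrow> 'a etriple set \<Rightarrow> 'b"
  assumes X: "sset X" and fib: "inner_fibration E B p"
    and u: "sset_map (ESd X) E u" and v: "sset_map (ESd' X) B v"
    and uv: "\<forall>n a. a \<in> sc (ESd X) n \<longrightarrow> p n (u n a) = v n (canon X n a)"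
begin

lemma u_sc: "a \<in> sc X (2 * k + 1) \<Longrightarrow> u k a \<in> sc E k"
  using u unfolding sset_map_def ESd_def by simp

lemma u_nat: "mor l k \<beta> \<Longrightarrow> a \<in> sc X (2 * k + 1) \<Longrightarrow>
    u l (sm X (2 * l + 1) (2 * k + 1) (join_self l k \<beta>) a) = sm E l k \<beta> (u k a)"
  using u unfolding sset_map_def ESd_def by simp

lemma v_sc: "c \<in> sc (ESd' X) k \<Longrightarrow> v k c \<in> sc B k"
  using v unfolding sset_map_def by simp

lemma v_nat: "mor l k \<beta> \<Longrightarrow> c \<in> sc (ESd' X) k \<Longrightarrow> v l (sm (ESd' X) l k \<beta> c) = sm B l k \<beta> (v k c)"
  using v unfolding sset_map_def by simp

lemma uv': "a \<in> sc X (2 * k + 1) \<Longrightarrow> p k (u k a) = v k (eclass X k (2 * k + 1, a, iota k))"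
  using uv unfolding ESd_def canon_eq by simp

lemma eclass_sc: assumes "x \<in> sc X m" "nsimp k m \<sigma>" shows "eclass X k (m, x, \<sigma>) \<in> sc (ESd' X) k"
proof -
  have "(m, x, \<sigma>) \<in> etriples X k" by (rule etriplesI[OF assms])
  then show ?thesis unfolding ESd'_def using imageI[of _ _ "eclass X k"] by simp
qed

definition Wall :: "(nat \<Rightarrow> 'a \<Rightarrow> nat \<Rightarrow> (nat \<Rightarrow> nat \<times> nat) \<Rightarrow> 'e) \<Rightarrow> nat \<Rightarrow> 'a \<Rightarrow> nat \<Rightarrow> (nat \<Rightarrow> nat \<times> nat) \<Rightarrow> 'e" where
  "Wall W q x k \<sigma> = (case ez X q x of (q0, s, y) \<Rightarrow> W q0 y k (post k s \<sigma>))"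

definition spec :: "nat \<Rightarrow> 'a \<Rightarrow> (nat \<Rightarrow> (nat \<Rightarrow> nat \<times> nat) \<Rightarrow> 'e) \<Rightarrow> (nat \<Rightarrow> 'a \<Rightarrow> nat \<Rightarrow> (nat \<Rightarrow> nat \<times> nat) \<Rightarrow> 'e) \<Rightarrow> bool" where
  "spec m y F W \<longleftrightarrow> natS E (simpS m UNIV) F \<and>
     (\<forall>k \<sigma>. nsimp k m \<sigma> \<longrightarrow> p k (F k \<sigma>) = v k (eclass X k (m, y, \<sigma>))) \<and>
     (\<forall>q' \<alpha> k \<sigma>'. q' < m \<and> mor q' m \<alpha> \<and> nsimp k q' \<sigma>' \<longrightarrow> F k (post k \<alpha> \<sigma>') = Wall W q' (sm X q' m \<alpha> y) k \<sigma>') \<and>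
     (\<forall>k s. mor (2 * k + 1) m s \<longrightarrow> F k (post k s (iota k)) = u k (sm X (2 * k + 1) m s y))"

definition good :: "(nat \<Rightarrow> 'a \<Rightarrow> nat \<Rightarrow> (nat \<Rightarrow> nat \<times> nat) \<Rightarrow> 'e) \<Rightarrow> nat \<Rightarrow> bool" where
  "good W M \<longleftrightarrow> (\<forall>q<M. \<forall>y. nd X q y \<longrightarrow> spec q y (W q y) W)"

lemma ezD:
  assumes "x \<in> sc X q"
  obtains q0 s y where "ez X q x = (q0, s, y)" "smor q q0 s" "nd X q0 y" "x = sm X q q0 s y"
  using ez_prop[OF X assms] by (cases "ez X q x") auto

lemma Wall_nd: assumes "nd X q y" shows "Wall W q y k \<sigma> = W q y k (post k (idm q) \<sigma>)"
proof -
  have "sm X q q (idm q) y = y" using sset_id[OF X nd_sc[OF assms]] .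
  then have "ez X q y = (q, idm q, y)" using ez_char[OF X smor_idm assms] by simp
  then show ?thesis unfolding Wall_def by simp
qed

context
  fixes W M
  assumes gd: "good W M"
begin

lemma specD: "q < M \<Longrightarrow> nd X q y \<Longrightarrow> spec q y (W q y) W"
  using gd unfolding good_def by blast

lemma W_nat: "q < M \<Longrightarrow> nd X q y \<Longrightarrow> natS E (simpS q UNIV) (W q y)"
  using specD unfolding spec_def by blast

lemma W_sc: "q < M \<Longrightarrow> nd X q y \<Longrightarrow> nsimp k q \<sigma> \<Longrightarrow> W q y k \<sigma> \<in> sc E k"
  using W_nat unfolding natS_def simpS_def by blast

lemma W_natural: "q < M \<Longrightarrow> nd X q y \<Longrightarrow> nsimp k q \<sigma> \<Longrightarrow> mor l k \<beta> \<Longrightarrow>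
    W q y l (pre l \<beta> \<sigma>) = sm E l k \<beta> (W q y k \<sigma>)"
  using W_nat unfolding natS_def simpS_def by blast

lemma W_v: "q < M \<Longrightarrow> nd X q y \<Longrightarrow> nsimp k q \<sigma> \<Longrightarrow> p k (W q y k \<sigma>) = v k (eclass X k (q, y, \<sigma>))"
  using specD unfolding spec_def by blast

lemma W_P3: "q < M \<Longrightarrow> nd X q y \<Longrightarrow> q' < q \<Longrightarrow> mor q' q \<alpha> \<Longrightarrow> nsimp k q' \<sigma>' \<Longrightarrow>
    W q y k (post k \<alpha> \<sigma>') = Wall W q' (sm X q' q \<alpha> y) k \<sigma>'"
  using specD unfolding spec_def by blast

lemma W_P4: "q < M \<Longrightarrow> nd X q y \<Longrightarrow> mor (2 * k + 1) q s \<Longrightarrow>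
    W q y k (post k s (iota k)) = u k (sm X (2 * k + 1) q s y)"
  using specD unfolding spec_def by blast

lemma W_P3': assumes "q < M" "nd X q y" "imor r q \<delta>" "nsimp k r \<sigma>"
  shows "W q y k (post k \<delta> \<sigma>) = Wall W r (sm X r q \<delta> y) k \<sigma>"
proof (cases "r < q")
  case True then show ?thesis using W_P3 assms imor_mor by blast
next
  case False
  then have rq: "r = q" using imor_le[OF assms(3)] by simp
  then have "\<delta> = idm q" using imor_endo assms(3) by simp
  then show ?thesis using rq Wall_nd[OF assms(2)] sset_id[OF X nd_sc[OF assms(2)]] by simp
qed

lemma Wall_sc: "q < M \<Longrightarrow> x \<in> sc X q \<Longrightarrow> nsimp k q \<sigma> \<Longrightarrow> Wall W q x k \<sigma> \<in> sc E k"
proof -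
  assume a: "q < M" "x \<in> sc X q" "nsimp k q \<sigma>"
  obtain q0 s y where e: "ez X q x = (q0, s, y)" "smor q q0 s" "nd X q0 y" "x = sm X q q0 s y"
    using ezD[OF a(2)] by blast
  have "q0 < M" using smor_le[OF e(2)] a(1) by simp
  then show ?thesis unfolding Wall_def e(1) using W_sc e(3) nsimp_post[OF a(3) smor_mor[OF e(2)]] by simp
qed

lemma Wall_natural: "q < M \<Longrightarrow> x \<in> sc X q \<Longrightarrow> nsimp k q \<sigma> \<Longrightarrow> mor l k \<beta> \<Longrightarrow>
    Wall W q x l (pre l \<beta> \<sigma>) = sm E l k \<beta> (Wall W q x k \<sigma>)"
proof -
  assume a: "q < M" "x \<in> sc X q" "nsimp k q \<sigma>" "mor l k \<beta>"
  obtain q0 s y where e: "ez X q x = (q0, s, y)" "smor q q0 s" "nd X q0 y" "x = sm X q q0 s y"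
    using ezD[OF a(2)] by blast
  have "q0 < M" using smor_le[OF e(2)] a(1) by simp
  then show ?thesis unfolding Wall_def e(1)
    using W_natural[OF _ e(3) nsimp_post[OF a(3) smor_mor[OF e(2)]] a(4)] pre_post[OF a(4)] by simp
qed

lemma Wall_natS: "q < M \<Longrightarrow> x \<in> sc X q \<Longrightarrow> natS E (simpS q UNIV) (Wall W q x)"
  unfolding natS_def simpS_def using Wall_sc Wall_natural by auto

lemma Wall_v: "q < M \<Longrightarrow> x \<in> sc X q \<Longrightarrow> nsimp k q \<sigma> \<Longrightarrow>
    p k (Wall W q x k \<sigma>) = v k (eclass X k (q, x, \<sigma>))"
proof -
  assume a: "q < M" "x \<in> sc X q" "nsimp k q \<sigma>"
  obtain q0 s y where e: "ez X q x = (q0, s, y)" "smor q q0 s" "nd X q0 y" "x = sm X q q0 s y"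
    using ezD[OF a(2)] by blast
  have "q0 < M" using smor_le[OF e(2)] a(1) by simp
  then have "p k (Wall W q x k \<sigma>) = v k (eclass X k (q0, y, post k s \<sigma>))"
    unfolding Wall_def e(1) using W_v e(3) nsimp_post[OF a(3) smor_mor[OF e(2)]] by simp
  also have "\<dots> = v k (eclass X k (q, x, \<sigma>))"
    using step_eq[OF smor_mor[OF e(2)] nd_sc[OF e(3)] a(3)] e(4) by simp
  finally show ?thesis .
qed

lemma Wall_compat:
  assumes q: "q < M" and x: "x \<in> sc X q" and \<alpha>: "mor q' q \<alpha>" and \<sigma>: "nsimp k q' \<sigma>"
  shows "Wall W q' (sm X q' q \<alpha> x) k \<sigma> = Wall W q x k (post k \<alpha> \<sigma>)"
proof -
  obtain q0 s y where e: "ez X q x = (q0, s, y)" "smor q q0 s" "nd X q0 y" "x = sm X q q0 s y"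
    using ezD[OF x] by blast
  have q0M: "q0 < M" using smor_le[OF e(2)] q by simp
  have ysc: "y \<in> sc X q0" using nd_sc[OF e(3)] .
  have hm: "mor q' q0 (cmp q' s \<alpha>)" using mor_cmp[OF \<alpha> smor_mor[OF e(2)]] .
  obtain r ee \<delta> where f: "smor q' r ee" "imor r q0 \<delta>" "cmp q' s \<alpha> = cmp q' \<delta> ee"
    using mor_factor[OF hm] by blast
  have dysc: "sm X r q0 \<delta> y \<in> sc X r" using sset_sc[OF X imor_mor[OF f(2)] ysc] .
  obtain q1 t y1 where e1: "ez X r (sm X r q0 \<delta> y) = (q1, t, y1)" "smor r q1 t" "nd X q1 y1"
    "sm X r q0 \<delta> y = sm X r q1 t y1"
    using ezD[OF dysc] by blast
  have y1sc: "y1 \<in> sc X q1" using nd_sc[OF e1(3)] .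
  have "sm X q' q \<alpha> x = sm X q' q0 (cmp q' s \<alpha>) y"
    using e(4) sset_cmp[OF X \<alpha> smor_mor[OF e(2)] ysc] by simp
  also have "\<dots> = sm X q' r ee (sm X r q0 \<delta> y)"
    using f(3) sset_cmp[OF X smor_mor[OF f(1)] imor_mor[OF f(2)] ysc] by simp
  also have "\<dots> = sm X q' q1 (cmp q' t ee) y1"
    using e1(4) sset_cmp[OF X smor_mor[OF f(1)] smor_mor[OF e1(2)] y1sc] by simp
  finally have xa: "sm X q' q \<alpha> x = sm X q' q1 (cmp q' t ee) y1" .
  have st: "smor q' q1 (cmp q' t ee)" using smor_cmp[OF f(1) e1(2)] .
  have "Wall W q' (sm X q' q \<alpha> x) k \<sigma> = W q1 y1 k (post k (cmp q' t ee) \<sigma>)"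
    unfolding Wall_def xa ez_char[OF X st e1(3)] by simp
  also have "\<dots> = W q1 y1 k (post k t (post k ee \<sigma>))" using post_post[OF \<sigma>] by simp
  also have "\<dots> = Wall W r (sm X r q0 \<delta> y) k (post k ee \<sigma>)" unfolding Wall_def e1(1) by simp
  also have "\<dots> = W q0 y k (post k \<delta> (post k ee \<sigma>))"
    using W_P3'[OF q0M e(3) f(2) nsimp_post[OF \<sigma> smor_mor[OF f(1)]]] by simp
  also have "\<dots> = W q0 y k (post k (cmp q' s \<alpha>) \<sigma>)" using post_post[OF \<sigma>] f(3) by simp
  also have "\<dots> = W q0 y k (post k s (post k \<alpha> \<sigma>))" using post_post[OF \<sigma>] by simp
  also have "\<dots> = Wall W q x k (post k \<alpha> \<sigma>)" unfolding Wall_def e(1) by simp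
  finally show ?thesis .
qed

lemma Wall_esd:
  assumes q: "q < M" and x: "x \<in> sc X q" and s': "mor (2 * k + 1) q s'"
  shows "Wall W q x k (post k s' (iota k)) = u k (sm X (2 * k + 1) q s' x)"
proof -
  obtain q0 s y where e: "ez X q x = (q0, s, y)" "smor q q0 s" "nd X q0 y" "x = sm X q q0 s y"
    using ezD[OF x] by blast
  have q0M: "q0 < M" using smor_le[OF e(2)] q by simp
  have "Wall W q x k (post k s' (iota k)) = W q0 y k (post k (cmp (2 * k + 1) s s') (iota k))"
    unfolding Wall_def e(1) using post_post[OF nsimp_iota] by simp
  also have "\<dots> = u k (sm X (2 * k + 1) q0 (cmp (2 * k + 1) s s') y)"
    using W_P4[OF q0M e(3) mor_cmp[OF s' smor_mor[OF e(2)]]] .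
  also have "\<dots> = u k (sm X (2 * k + 1) q s' x)"
    using e(4) sset_cmp[OF X s' smor_mor[OF e(2)] nd_sc[OF e(3)]] by simp
  finally show ?thesis .
qed

end

end


lemma cmp_image: "cmp n \<delta> e ` {0..n} = \<delta> ` (e ` {0..n})"
  unfolding cmp_def by auto

context mainctx
begin

context
  fixes W M
  assumes gd: "good W M"
begin

lemma NF:
  assumes y: "y \<in> sc X mm" and q1: "q1 < M" and \<alpha>: "mor q1 mm \<alpha>" and \<sigma>: "nsimp k q1 \<sigma>"
  shows "\<exists>r \<delta> \<tau>. r \<le> q1 \<and> imor r mm \<delta> \<and> nsimp k r \<tau> \<and> \<delta> ` {0..r} = vals k (post k \<alpha> \<sigma>)
     \<and> post k \<delta> \<tau> = post k \<alpha> \<sigma> \<and> Wall W q1 (sm X q1 mm \<alpha> y) k \<sigma> = Wall W r (sm X r mm \<delta> y) k \<tau>"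
proof -
  obtain r1 \<epsilon> \<sigma>'' where vf: "imor r1 q1 \<epsilon>" "nsimp k r1 \<sigma>''" "cov r1 (im k \<sigma>'')" "\<sigma> = post k \<epsilon> \<sigma>''"
    using val_factor[OF \<sigma>] by blast
  define h where "h = cmp r1 \<alpha> \<epsilon>"
  have hm: "mor r1 mm h" unfolding h_def using mor_cmp[OF imor_mor[OF vf(1)] \<alpha>] .
  obtain r ee \<delta> where f: "smor r1 r ee" "imor r mm \<delta>" "h = cmp r1 \<delta> ee"
    using mor_factor[OF hm] by blast
  define \<tau> where "\<tau> = post k ee \<sigma>''"
  have ns\<tau>: "nsimp k r \<tau>" unfolding \<tau>_def using nsimp_post[OF vf(2) smor_mor[OF f(1)]] .
  have rr1: "r \<le> r1" using smor_le[OF f(1)] .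
  have r1q1: "r1 \<le> q1" using imor_le[OF vf(1)] .
  have xa: "sm X q1 mm \<alpha> y \<in> sc X q1" using sset_sc[OF X \<alpha> y] .
  have dy: "sm X r mm \<delta> y \<in> sc X r" using sset_sc[OF X imor_mor[OF f(2)] y] .
  have "Wall W q1 (sm X q1 mm \<alpha> y) k \<sigma> = Wall W r1 (sm X r1 q1 \<epsilon> (sm X q1 mm \<alpha> y)) k \<sigma>''"
    using Wall_compat[OF gd q1 xa imor_mor[OF vf(1)] vf(2)] vf(4) by simp
  also have "sm X r1 q1 \<epsilon> (sm X q1 mm \<alpha> y) = sm X r1 r ee (sm X r mm \<delta> y)"
    using sset_cmp[OF X imor_mor[OF vf(1)] \<alpha> y] sset_cmp[OF X smor_mor[OF f(1)] imor_mor[OF f(2)] y] f(3) h_def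
    by simp
  also have "Wall W r1 (sm X r1 r ee (sm X r mm \<delta> y)) k \<sigma>'' = Wall W r (sm X r mm \<delta> y) k \<tau>"
    unfolding \<tau>_def using Wall_compat[OF gd _ dy smor_mor[OF f(1)] vf(2)] rr1 r1q1 q1 by simp
  finally have wq: "Wall W q1 (sm X q1 mm \<alpha> y) k \<sigma> = Wall W r (sm X r mm \<delta> y) k \<tau>" .
  have pa: "post k \<alpha> \<sigma> = post k h \<sigma>''" unfolding h_def using vf(4) post_post[OF vf(2)] by simp
  have "vals k (post k \<alpha> \<sigma>) = h ` {0..r1}" using pa vals_post vals_cov_eq[OF vf(2,3)] by simp
  also have "\<dots> = \<delta> ` {0..r}" using f(3) cmp_image smor_image[OF f(1)] by simp
  finally have vv: "\<delta> ` {0..r} = vals k (post k \<alpha> \<sigma>)" by simp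
  have "post k \<delta> \<tau> = post k \<alpha> \<sigma>" unfolding \<tau>_def using pa f(3) post_post[OF vf(2)] by simp
  then show ?thesis using wq vv ns\<tau> f(2) rr1 r1q1 by (meson le_trans)
qed

lemma AR1:
  assumes y: "y \<in> sc X mm" and q1: "q1 < M" and q2: "q2 < M"
    and \<alpha>1: "mor q1 mm \<alpha>1" and \<alpha>2: "mor q2 mm \<alpha>2"
    and \<sigma>1: "nsimp k q1 \<sigma>1" and \<sigma>2: "nsimp k q2 \<sigma>2"
    and eq: "post k \<alpha>1 \<sigma>1 = post k \<alpha>2 \<sigma>2"
  shows "Wall W q1 (sm X q1 mm \<alpha>1 y) k \<sigma>1 = Wall W q2 (sm X q2 mm \<alpha>2 y) k \<sigma>2"
proof -
  obtain r1 \<delta>1 \<tau>1 where n1: "imor r1 mm \<delta>1" "nsimp k r1 \<tau>1" "\<delta>1 ` {0..r1} = vals k (post k \<alpha>1 \<sigma>1)"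
    "post k \<delta>1 \<tau>1 = post k \<alpha>1 \<sigma>1" "Wall W q1 (sm X q1 mm \<alpha>1 y) k \<sigma>1 = Wall W r1 (sm X r1 mm \<delta>1 y) k \<tau>1"
    using NF[OF y q1 \<alpha>1 \<sigma>1] by blast
  obtain r2 \<delta>2 \<tau>2 where n2: "imor r2 mm \<delta>2" "nsimp k r2 \<tau>2" "\<delta>2 ` {0..r2} = vals k (post k \<alpha>2 \<sigma>2)"
    "post k \<delta>2 \<tau>2 = post k \<alpha>2 \<sigma>2" "Wall W q2 (sm X q2 mm \<alpha>2 y) k \<sigma>2 = Wall W r2 (sm X r2 mm \<delta>2 y) k \<tau>2"
    using NF[OF y q2 \<alpha>2 \<sigma>2] by blast
  have "r1 = r2 \<and> \<delta>1 = \<delta>2" using imor_unique[OF n1(1) n2(1)] n1(3) n2(3) eq by simp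
  moreover then have "\<tau>1 = \<tau>2" using post_inj[OF n1(1) n1(2)] n2(2) n1(4) n2(4) eq by simp
  ultimately show ?thesis using n1(5) n2(5) by simp
qed

lemma AR2:
  assumes y: "y \<in> sc X mm" and mmM: "mm \<le> M" and q': "q' < mm"
    and \<alpha>: "mor q' mm \<alpha>" and \<sigma>': "nsimp k q' \<sigma>'" and s: "mor (2 * k + 1) mm s"
    and eq: "post k \<alpha> \<sigma>' = post k s (iota k)"
  shows "Wall W q' (sm X q' mm \<alpha> y) k \<sigma>' = u k (sm X (2 * k + 1) mm s y)"
proof -
  have "\<not> cov mm (im k (post k s (iota k)))" using noncov_post[OF q' \<alpha> \<sigma>'] eq by simp
  then obtain r \<delta> e where f: "r < mm" "imor r mm \<delta>" "mor (2 * k + 1) r e" "s = cmp (2 * k + 1) \<delta> e"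
    using esd_noncov_factor[OF s] by blast
  have pe: "post k s (iota k) = post k \<delta> (post k e (iota k))" using f(4) post_post[OF nsimp_iota] by simp
  have ns: "nsimp k r (post k e (iota k))" using nsimp_post[OF nsimp_iota f(3)] .
  have "Wall W q' (sm X q' mm \<alpha> y) k \<sigma>' = Wall W r (sm X r mm \<delta> y) k (post k e (iota k))"
    using AR1[OF y _ _ \<alpha> imor_mor[OF f(2)] \<sigma>' ns] eq pe q' f(1) mmM by simp
  also have "\<dots> = u k (sm X (2 * k + 1) r e (sm X r mm \<delta> y))"
    using Wall_esd[OF gd _ sset_sc[OF X imor_mor[OF f(2)] y] f(3)] f(1) mmM by simp
  also have "\<dots> = u k (sm X (2 * k + 1) mm s y)"
    using sset_cmp[OF X f(3) imor_mor[OF f(2)] y] f(4) by simp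
  finally show ?thesis .
qed

end

end


context mainctx
begin

lemma exist_step:
  assumes gd: "good W m" and y: "nd X m y"
  shows "\<exists>F. spec m y F W"
proof -
  have ysc: "y \<in> sc X m" using nd_sc[OF y] .
  define ok where "ok k \<sigma> a \<longleftrightarrow>
     (\<exists>q' \<alpha> \<sigma>'. q' < m \<and> mor q' m \<alpha> \<and> nsimp k q' \<sigma>' \<and> post k \<alpha> \<sigma>' = \<sigma> \<and> a = Wall W q' (sm X q' m \<alpha> y) k \<sigma>')
     \<or> (\<exists>s. mor (2 * k + 1) m s \<and> post k s (iota k) = \<sigma> \<and> a = u k (sm X (2 * k + 1) m s y))" for k \<sigma> a
  have uniq: "a = b" if "ok k \<sigma> a" "ok k \<sigma> b" for k \<sigma> a b
  proof -
    have AR2': "Wall W q' (sm X q' m \<alpha> y) k \<sigma>' = u k (sm X (2 * k + 1) m s y)"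
      if "q' < m" "mor q' m \<alpha>" "nsimp k q' \<sigma>'" "mor (2 * k + 1) m s" "post k \<alpha> \<sigma>' = post k s (iota k)"
      for q' \<alpha> \<sigma>' s
      using AR2[OF gd ysc order_refl that] .
    from that show ?thesis unfolding ok_def
    proof (elim disjE exE conjE)
      fix q1 \<alpha>1 \<sigma>1 q2 \<alpha>2 \<sigma>2
      assume "q1 < m" "mor q1 m \<alpha>1" "nsimp k q1 \<sigma>1" "post k \<alpha>1 \<sigma>1 = \<sigma>" "a = Wall W q1 (sm X q1 m \<alpha>1 y) k \<sigma>1"
        "q2 < m" "mor q2 m \<alpha>2" "nsimp k q2 \<sigma>2" "post k \<alpha>2 \<sigma>2 = \<sigma>" "b = Wall W q2 (sm X q2 m \<alpha>2 y) k \<sigma>2"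
      then show "a = b" using AR1[OF gd ysc] by metis
    next
      fix q1 \<alpha>1 \<sigma>1 s
      assume "q1 < m" "mor q1 m \<alpha>1" "nsimp k q1 \<sigma>1" "post k \<alpha>1 \<sigma>1 = \<sigma>" "a = Wall W q1 (sm X q1 m \<alpha>1 y) k \<sigma>1"
        "mor (2 * k + 1) m s" "post k s (iota k) = \<sigma>" "b = u k (sm X (2 * k + 1) m s y)"
      then show "a = b" using AR2' by metis
    next
      fix q1 \<alpha>1 \<sigma>1 s
      assume "q1 < m" "mor q1 m \<alpha>1" "nsimp k q1 \<sigma>1" "post k \<alpha>1 \<sigma>1 = \<sigma>" "b = Wall W q1 (sm X q1 m \<alpha>1 y) k \<sigma>1"
        "mor (2 * k + 1) m s" "post k s (iota k) = \<sigma>" "a = u k (sm X (2 * k + 1) m s y)"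
      then show "a = b" using AR2' by metis
    next
      fix s1 s2
      assume "mor (2 * k + 1) m s1" "post k s1 (iota k) = \<sigma>" "a = u k (sm X (2 * k + 1) m s1 y)"
        "mor (2 * k + 1) m s2" "post k s2 (iota k) = \<sigma>" "b = u k (sm X (2 * k + 1) m s2 y)"
      then show "a = b" using iota_rep_unique by metis
    qed
  qed
  define f where "f k \<sigma> = (SOME a. ok k \<sigma> a)" for k \<sigma>
  have f_eq: "f k \<sigma> = a" if "ok k \<sigma> a" for k \<sigma> a
  proof -
    have "ok k \<sigma> (f k \<sigma>)" unfolding f_def using that by (rule someI)
    then show ?thesis using uniq that by blast
  qed
  have okRn: "ok k (post k \<alpha> \<sigma>') (Wall W q' (sm X q' m \<alpha> y) k \<sigma>')"
    if "q' < m" "mor q' m \<alpha>" "nsimp k q' \<sigma>'" for k q' \<alpha> \<sigma>'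
    unfolding ok_def using that by blast
  have okRe: "ok k (post k s (iota k)) (u k (sm X (2 * k + 1) m s y))"
    if "mor (2 * k + 1) m s" for k s
    unfolding ok_def using that by blast
  have rep: "(\<exists>q' \<alpha> \<sigma>'. q' < m \<and> mor q' m \<alpha> \<and> nsimp k q' \<sigma>' \<and> \<sigma> = post k \<alpha> \<sigma>')
      \<or> (\<exists>s. mor (2 * k + 1) m s \<and> \<sigma> = post k s (iota k))"
    if "(k, \<sigma>) \<in> simpS m (Kf m)" for k \<sigma>
  proof -
    have ns: "nsimp k m \<sigma>" and K: "\<not> cov m (im k \<sigma>) \<or> esd (im k \<sigma>)"
      using that unfolding simpS_def Kf_def by auto
    show ?thesis
    proof (cases "esd (im k \<sigma>)")
      case True then show ?thesis using esd_rep[OF ns] by blast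
    next
      case False
      then have nc: "\<not> cov m (im k \<sigma>)" using K by simp
      obtain r \<epsilon> \<sigma>'' where vf: "imor r m \<epsilon>" "nsimp k r \<sigma>''" "cov r (im k \<sigma>'')" "\<sigma> = post k \<epsilon> \<sigma>''"
        using val_factor[OF ns] by blast
      have "r \<noteq> m"
      proof
        assume "r = m"
        then have "\<epsilon> = idm m" using imor_endo vf(1) by simp
        then have "\<sigma> = \<sigma>''" using vf(4) post_idm[OF vf(2)] \<open>r = m\<close> by simp
        then show False using nc vf(3) \<open>r = m\<close> by simp
      qed
      then have "r < m" using imor_le[OF vf(1)] by simp
      then show ?thesis using vf imor_mor by blast
    qed
  qed
  define g where "g k \<sigma> = v k (eclass X k (m, y, \<sigma>))" for k \<sigma>
  have fK: "natS E (simpS m (Kf m)) f"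
    unfolding natS_def
  proof (intro conjI allI impI)
    fix k \<sigma> assume a: "(k, \<sigma>) \<in> simpS m (Kf m)"
    from rep[OF a] show "f k \<sigma> \<in> sc E k"
    proof (elim disjE exE conjE)
      fix q' \<alpha> \<sigma>' assume r: "q' < m" "mor q' m \<alpha>" "nsimp k q' \<sigma>'" "\<sigma> = post k \<alpha> \<sigma>'"
      then show ?thesis using f_eq[OF okRn[OF r(1-3)]] Wall_sc[OF gd r(1) sset_sc[OF X r(2) ysc] r(3)] by simp
    next
      fix s assume r: "mor (2 * k + 1) m s" "\<sigma> = post k s (iota k)"
      then show ?thesis using f_eq[OF okRe[OF r(1)]] u_sc[OF sset_sc[OF X r(1) ysc]] by simp
    qed
  next
    fix k l \<beta> \<sigma> assume a: "mor l k \<beta> \<and> (k, \<sigma>) \<in> simpS m (Kf m)"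
    then have \<beta>: "mor l k \<beta>" and r0: "(k, \<sigma>) \<in> simpS m (Kf m)" by simp_all
    from rep[OF r0] show "f l (pre l \<beta> \<sigma>) = sm E l k \<beta> (f k \<sigma>)"
    proof (elim disjE exE conjE)
      fix q' \<alpha> \<sigma>' assume r: "q' < m" "mor q' m \<alpha>" "nsimp k q' \<sigma>'" "\<sigma> = post k \<alpha> \<sigma>'"
      have xa: "sm X q' m \<alpha> y \<in> sc X q'" using sset_sc[OF X r(2) ysc] .
      have "pre l \<beta> \<sigma> = post l \<alpha> (pre l \<beta> \<sigma>')" using r(4) pre_post[OF \<beta>] by simp
      then have "f l (pre l \<beta> \<sigma>) = Wall W q' (sm X q' m \<alpha> y) l (pre l \<beta> \<sigma>')"
        using f_eq[OF okRn[OF r(1,2) nsimp_pre[OF r(3) \<beta>]]] by simp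
      also have "\<dots> = sm E l k \<beta> (Wall W q' (sm X q' m \<alpha> y) k \<sigma>')"
        using Wall_natural[OF gd r(1) xa r(3) \<beta>] .
      also have "\<dots> = sm E l k \<beta> (f k \<sigma>)" using f_eq[OF okRn[OF r(1-3)]] r(4) by simp
      finally show ?thesis .
    next
      fix s assume r: "mor (2 * k + 1) m s" "\<sigma> = post k s (iota k)"
      have sy: "sm X (2 * k + 1) m s y \<in> sc X (2 * k + 1)" using sset_sc[OF X r(1) ysc] .
      have cm: "mor (2 * l + 1) m (cmp (2 * l + 1) s (join_self l k \<beta>))"
        using mor_cmp[OF mor_js[OF \<beta>] r(1)] .
      have "pre l \<beta> \<sigma> = post l (cmp (2 * l + 1) s (join_self l k \<beta>)) (iota l)"
        using r(2) pre_post_iota[OF \<beta> r(1)] by simp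
      then have "f l (pre l \<beta> \<sigma>) = u l (sm X (2 * l + 1) m (cmp (2 * l + 1) s (join_self l k \<beta>)) y)"
        using f_eq[OF okRe[OF cm]] by simp
      also have "\<dots> = u l (sm X (2 * l + 1) (2 * k + 1) (join_self l k \<beta>) (sm X (2 * k + 1) m s y))"
        using sset_cmp[OF X mor_js[OF \<beta>] r(1) ysc] by simp
      also have "\<dots> = sm E l k \<beta> (u k (sm X (2 * k + 1) m s y))" using u_nat[OF \<beta> sy] .
      also have "\<dots> = sm E l k \<beta> (f k \<sigma>)" using f_eq[OF okRe[OF r(1)]] r(2) by simp
      finally show ?thesis .
    qed
  qed
  have pfK: "p k (f k \<sigma>) = g k \<sigma>" if a: "(k, \<sigma>) \<in> simpS m (Kf m)" for k \<sigma>
    using rep[OF a]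
  proof (elim disjE exE conjE)
    fix q' \<alpha> \<sigma>' assume r: "q' < m" "mor q' m \<alpha>" "nsimp k q' \<sigma>'" "\<sigma> = post k \<alpha> \<sigma>'"
    have xa: "sm X q' m \<alpha> y \<in> sc X q'" using sset_sc[OF X r(2) ysc] .
    have "p k (f k \<sigma>) = v k (eclass X k (q', sm X q' m \<alpha> y, \<sigma>'))"
      using f_eq[OF okRn[OF r(1-3)]] r(4) Wall_v[OF gd r(1) xa r(3)] by simp
    also have "\<dots> = g k \<sigma>" unfolding g_def using step_eq[OF r(2) ysc r(3)] r(4) by simp
    finally show ?thesis .
  next
    fix s assume r: "mor (2 * k + 1) m s" "\<sigma> = post k s (iota k)"
    have sy: "sm X (2 * k + 1) m s y \<in> sc X (2 * k + 1)" using sset_sc[OF X r(1) ysc] .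
    have "p k (f k \<sigma>) = v k (eclass X k (2 * k + 1, sm X (2 * k + 1) m s y, iota k))"
      using f_eq[OF okRe[OF r(1)]] r(2) uv'[OF sy] by simp
    also have "\<dots> = g k \<sigma>" unfolding g_def using step_eq[OF r(1) ysc nsimp_iota] r(2) by simp
    finally show ?thesis .
  qed
  have gN: "natS B (simpS m UNIV) g"
    unfolding natS_def
  proof (intro conjI allI impI)
    fix k \<sigma> assume "(k, \<sigma>) \<in> simpS m UNIV"
    then have "nsimp k m \<sigma>" unfolding simpS_def by simp
    then show "g k \<sigma> \<in> sc B k" unfolding g_def using v_sc eclass_sc[OF ysc] by blast
  next
    fix k l \<beta> \<sigma> assume a: "mor l k \<beta> \<and> (k, \<sigma>) \<in> simpS m UNIV"
    then have \<beta>: "mor l k \<beta>" and ns: "nsimp k m \<sigma>" unfolding simpS_def by auto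
    have "g l (pre l \<beta> \<sigma>) = v l (sm (ESd' X) l k \<beta> (eclass X k (m, y, \<sigma>)))"
      unfolding g_def using sm_ESd'_eclass[OF X etriplesI[OF ysc ns] \<beta>] by (simp add: apre_def)
    also have "\<dots> = sm B l k \<beta> (g k \<sigma>)" unfolding g_def using v_nat[OF \<beta> eclass_sc[OF ysc ns]] .
    finally show "g l (pre l \<beta> \<sigma>) = sm B l k \<beta> (g k \<sigma>)" .
  qed
  obtain F where F: "natS E (simpS m UNIV) F" "\<forall>k \<sigma>. (k, \<sigma>) \<in> simpS m (Kf m) \<longrightarrow> F k \<sigma> = f k \<sigma>"
    "\<forall>k \<sigma>. (k, \<sigma>) \<in> simpS m UNIV \<longrightarrow> p k (F k \<sigma>) = g k \<sigma>"
    using fill_all[OF fib fK gN pfK] by blast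
  have "spec m y F W"
    unfolding spec_def
  proof (intro conjI allI impI)
    show "natS E (simpS m UNIV) F" by (rule F(1))
  next
    fix k \<sigma> assume "nsimp k m \<sigma>"
    then show "p k (F k \<sigma>) = v k (eclass X k (m, y, \<sigma>))" using F(3) unfolding g_def simpS_def by simp
  next
    fix q' \<alpha> k \<sigma>' assume a: "q' < m \<and> mor q' m \<alpha> \<and> nsimp k q' \<sigma>'"
    then have "(k, post k \<alpha> \<sigma>') \<in> simpS m (Kf m)"
      using noncov_post nsimp_post unfolding simpS_def Kf_def by blast
    then show "F k (post k \<alpha> \<sigma>') = Wall W q' (sm X q' m \<alpha> y) k \<sigma>'"
      using F(2) f_eq[OF okRn] a by simp
  next
    fix k s assume a: "mor (2 * k + 1) m s"
    then have "(k, post k s (iota k)) \<in> simpS m (Kf m)"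
      using esd_post_iota nsimp_post[OF nsimp_iota] unfolding simpS_def Kf_def by blast
    then show "F k (post k s (iota k)) = u k (sm X (2 * k + 1) m s y)"
      using F(2) f_eq[OF okRe[OF a]] by simp
  qed
  then show ?thesis by blast
qed

end


context mainctx
begin

primrec tab :: "nat \<Rightarrow> nat \<Rightarrow> 'a \<Rightarrow> nat \<Rightarrow> (nat \<Rightarrow> nat \<times> nat) \<Rightarrow> 'e" where
  "tab 0 = (\<lambda>q y. SOME F. spec 0 y F (\<lambda>_ _ _ _. undefined))"
| "tab (Suc n) = (\<lambda>q y. if q = Suc n then (SOME F. spec (Suc n) y F (tab n)) else tab n q y)"

definition Wfin :: "nat \<Rightarrow> 'a \<Rightarrow> nat \<Rightarrow> (nat \<Rightarrow> nat \<times> nat) \<Rightarrow> 'e" where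
  "Wfin q = tab q q"

lemma tab_stable: "q \<le> n \<Longrightarrow> tab n q = Wfin q"
proof (induction n)
  case 0 then show ?case unfolding Wfin_def by simp
next
  case (Suc n)
  show ?case
  proof (cases "q = Suc n")
    case True then show ?thesis unfolding Wfin_def by simp
  next
    case False
    then have "q \<le> n" using Suc.prems by simp
    then show ?thesis using Suc.IH False by (simp add: fun_eq_iff)
  qed
qed

lemma Wall_cong:
  assumes "x \<in> sc X q" "\<And>q0. q0 \<le> q \<Longrightarrow> W q0 = W' q0"
  shows "Wall W q x = Wall W' q x"
proof (intro ext)
  fix k \<sigma>
  obtain q0 s y where e: "ez X q x = (q0, s, y)" "smor q q0 s" "nd X q0 y" "x = sm X q q0 s y"
    using ezD[OF assms(1)] by blast
  have "W q0 = W' q0" using assms(2) smor_le[OF e(2)] by simp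
  then show "Wall W q x k \<sigma> = Wall W' q x k \<sigma>" unfolding Wall_def e(1) by simp
qed

lemma spec_cong:
  assumes y: "y \<in> sc X m" and agr: "\<And>q. q < m \<Longrightarrow> W q = W' q"
  shows "spec m y F W = spec m y F W'"
proof -
  have eqs: "Wall W q' (sm X q' m \<alpha> y) = Wall W' q' (sm X q' m \<alpha> y)" if "q' < m" "mor q' m \<alpha>" for q' \<alpha>
  proof (rule Wall_cong[OF sset_sc[OF X that(2) y]])
    fix q0 assume "q0 \<le> q'" then show "W q0 = W' q0" using agr that(1) by simp
  qed
  have P3: "(\<forall>q' \<alpha> k \<sigma>'. q' < m \<and> mor q' m \<alpha> \<and> nsimp k q' \<sigma>' \<longrightarrow> F k (post k \<alpha> \<sigma>') = Wall W q' (sm X q' m \<alpha> y) k \<sigma>')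
      \<longleftrightarrow> (\<forall>q' \<alpha> k \<sigma>'. q' < m \<and> mor q' m \<alpha> \<and> nsimp k q' \<sigma>' \<longrightarrow> F k (post k \<alpha> \<sigma>') = Wall W' q' (sm X q' m \<alpha> y) k \<sigma>')"
  proof (intro iffI allI impI)
    fix q' \<alpha> k \<sigma>'
    assume L: "\<forall>q' \<alpha> k \<sigma>'. q' < m \<and> mor q' m \<alpha> \<and> nsimp k q' \<sigma>' \<longrightarrow> F k (post k \<alpha> \<sigma>') = Wall W q' (sm X q' m \<alpha> y) k \<sigma>'"
      and c: "q' < m \<and> mor q' m \<alpha> \<and> nsimp k q' \<sigma>'"
    then have "F k (post k \<alpha> \<sigma>') = Wall W q' (sm X q' m \<alpha> y) k \<sigma>'" by blast
    then show "F k (post k \<alpha> \<sigma>') = Wall W' q' (sm X q' m \<alpha> y) k \<sigma>'" using eqs c by simp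
  next
    fix q' \<alpha> k \<sigma>'
    assume L: "\<forall>q' \<alpha> k \<sigma>'. q' < m \<and> mor q' m \<alpha> \<and> nsimp k q' \<sigma>' \<longrightarrow> F k (post k \<alpha> \<sigma>') = Wall W' q' (sm X q' m \<alpha> y) k \<sigma>'"
      and c: "q' < m \<and> mor q' m \<alpha> \<and> nsimp k q' \<sigma>'"
    then have "F k (post k \<alpha> \<sigma>') = Wall W' q' (sm X q' m \<alpha> y) k \<sigma>'" by blast
    then show "F k (post k \<alpha> \<sigma>') = Wall W q' (sm X q' m \<alpha> y) k \<sigma>'" using eqs c by simp
  qed
  show ?thesis unfolding spec_def using P3 by blast
qed

lemma good_cong:
  assumes "\<And>q. q < M \<Longrightarrow> W q = W' q"
  shows "good W M = good W' M"
proof -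
  have "spec q y (W q y) W = spec q y (W' q y) W'" if "q < M" "nd X q y" for q y
    using spec_cong[OF nd_sc[OF that(2)], of W W' "W q y"] assms that by simp
  then show ?thesis unfolding good_def by blast
qed

lemma good_Wfin: "good Wfin M"
proof (induction M)
  case 0 then show ?case unfolding good_def by simp
next
  case (Suc M)
  define Wp where "Wp = (case M of 0 \<Rightarrow> (\<lambda>_ _ _ _. undefined) | Suc n \<Rightarrow> tab n)"
  have agree: "\<And>q. q < M \<Longrightarrow> Wp q = Wfin q"
    unfolding Wp_def by (cases M) (auto intro: tab_stable)
  have gp: "good Wp M" using good_cong[of M Wp Wfin] agree Suc.IH by simp
  have WM: "Wfin M y = (SOME F. spec M y F Wp)" for y
    unfolding Wfin_def Wp_def by (cases M) simp_all
  have "spec M y (Wfin M y) Wfin" if y: "nd X M y" for y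
  proof -
    have "\<exists>F. spec M y F Wp" using exist_step[OF gp y] .
    then have "spec M y (Wfin M y) Wp" unfolding WM by (rule someI_ex)
    then show ?thesis using spec_cong[OF nd_sc[OF y], of Wp Wfin] agree by simp
  qed
  then show ?case using Suc.IH unfolding good_def using less_Suc_eq by auto
qed

definition Wt :: "nat \<Rightarrow> 'a etriple \<Rightarrow> 'e" where
  "Wt k t = (case t of (m, x, \<sigma>) \<Rightarrow> Wall Wfin m x k \<sigma>)"

lemma Wt_step: "coend_step X k s t \<Longrightarrow> Wt k s = Wt k t"
proof -
  assume "coend_step X k s t"
  then obtain m m' \<alpha> x \<sigma> where a: "mor m m' \<alpha>" "x \<in> sc X m'" "nsimp k m \<sigma>"
    "s = (m, sm X m m' \<alpha> x, \<sigma>)" "t = (m', x, post k \<alpha> \<sigma>)"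
    unfolding coend_step_def by blast
  show ?thesis unfolding Wt_def a(4,5)
    using Wall_compat[OF good_Wfin[of "Suc m'"] _ a(2) a(1) a(3)] by simp
qed

lemma Wt_eq: "coend_eq X k s t \<Longrightarrow> Wt k s = Wt k t"
  unfolding coend_eq_def
proof (induction rule: rtranclp_induct)
  case base then show ?case by simp
next
  case (step y z)
  then show ?case using Wt_step by metis
qed

lemma ESd'_scE:
  assumes "c \<in> sc (ESd' X) k"
  obtains m x \<sigma> where "(m, x, \<sigma>) \<in> etriples X k" "c = eclass X k (m, x, \<sigma>)"
proof -
  have "c \<in> eclass X k ` etriples X k" using assms unfolding ESd'_def by simp
  then obtain t where t: "t \<in> etriples X k" "c = eclass X k t" by blast
  obtain m x \<sigma> where "t = (m, x, \<sigma>)" by (cases t) auto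
  then show ?thesis using that t by simp
qed

definition w :: "nat \<Rightarrow> 'a etriple set \<Rightarrow> 'e" where
  "w k c = Wt k (SOME t. t \<in> c)"

lemma w_eclass: "t \<in> etriples X k \<Longrightarrow> w k (eclass X k t) = Wt k t"
proof -
  assume t: "t \<in> etriples X k"
  have "(SOME t'. t' \<in> eclass X k t) \<in> eclass X k t" using eclass_self[OF t] by (rule someI)
  then have "coend_eq X k t (SOME t'. t' \<in> eclass X k t)" unfolding eclass_def by simp
  then show ?thesis unfolding w_def using Wt_eq by metis
qed

lemma lift: "sset_map (ESd' X) E w \<and> (\<forall>n a. a \<in> sc (ESd X) n \<longrightarrow> w n (canon X n a) = u n a)
    \<and> (\<forall>n c. c \<in> sc (ESd' X) n \<longrightarrow> p n (w n c) = v n c)"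
proof (intro conjI allI impI)
  have scE: "w k c \<in> sc E k" if cin: "c \<in> sc (ESd' X) k" for k c
  proof -
    obtain m x \<sigma> where t: "(m, x, \<sigma>) \<in> etriples X k" "c = eclass X k (m, x, \<sigma>)"
      using ESd'_scE[OF cin] by blast
    have "x \<in> sc X m" "nsimp k m \<sigma>" using t(1) unfolding etriples_def by auto
    then show ?thesis using t w_eclass Wall_sc[OF good_Wfin[of "Suc m"]] unfolding Wt_def by simp
  qed
  show "sset_map (ESd' X) E w"
    unfolding sset_map_def
  proof (intro conjI allI impI)
    fix n c assume "c \<in> sc (ESd' X) n" then show "w n c \<in> sc E n" by (rule scE)
  next
    fix n m \<beta> c assume a: "mor n m \<beta> \<and> c \<in> sc (ESd' X) m"
    then have \<beta>: "mor n m \<beta>" by simp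
    obtain q x \<sigma> where t: "(q, x, \<sigma>) \<in> etriples X m" "c = eclass X m (q, x, \<sigma>)"
      using ESd'_scE[of c m] a by blast
    have x: "x \<in> sc X q" and ns: "nsimp m q \<sigma>" using t(1) unfolding etriples_def by auto
    have "sm (ESd' X) n m \<beta> c = eclass X n (q, x, pre n \<beta> \<sigma>)"
      using sm_ESd'_eclass[OF X t(1) \<beta>] t(2) by (simp add: apre_def)
    then have "w n (sm (ESd' X) n m \<beta> c) = Wall Wfin q x n (pre n \<beta> \<sigma>)"
      using w_eclass[OF etriplesI[OF x nsimp_pre[OF ns \<beta>]]] unfolding Wt_def by simp
    also have "\<dots> = sm E n m \<beta> (Wall Wfin q x m \<sigma>)"
      using Wall_natural[OF good_Wfin[of "Suc q"] _ x ns \<beta>] by simp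
    also have "\<dots> = sm E n m \<beta> (w m c)" using w_eclass[OF t(1)] t(2) unfolding Wt_def by simp
    finally show "w n (sm (ESd' X) n m \<beta> c) = sm E n m \<beta> (w m c)" .
  qed
next
  fix n a assume "a \<in> sc (ESd X) n"
  then have a: "a \<in> sc X (2 * n + 1)" unfolding ESd_def by simp
  have "w n (canon X n a) = Wall Wfin (2 * n + 1) a n (iota n)"
    unfolding canon_eq using w_eclass[OF etriplesI[OF a nsimp_iota]] unfolding Wt_def by simp
  also have "\<dots> = Wall Wfin (2 * n + 1) a n (post n (idm (2 * n + 1)) (iota n))"
    using post_idm[OF nsimp_iota] by simp
  also have "\<dots> = u n (sm X (2 * n + 1) (2 * n + 1) (idm (2 * n + 1)) a)"
    using Wall_esd[OF good_Wfin[of "Suc (2 * n + 1)"] _ a mor_idm] by simp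
  also have "\<dots> = u n a" using sset_id[OF X a] by simp
  finally show "w n (canon X n a) = u n a" .
next
  fix n c assume "c \<in> sc (ESd' X) n"
  then obtain m x \<sigma> where t: "(m, x, \<sigma>) \<in> etriples X n" "c = eclass X n (m, x, \<sigma>)"
    using ESd'_scE by blast
  have x: "x \<in> sc X m" and ns: "nsimp n m \<sigma>" using t(1) unfolding etriples_def by auto
  show "p n (w n c) = v n c"
    using w_eclass[OF t(1)] t(2) Wall_v[OF good_Wfin[of "Suc m"] _ x ns] unfolding Wt_def by simp
qed

end

theorem proposition8p23:
  fixes X :: "'a sset"
  assumes "sset X"
  shows "sset_map (ESd X) (ESd' X) (canon X) \<and>
         (\<forall>(E :: 'e sset) (B :: 'b sset) p. inner_fibration E B p \<longrightarrow>
             llp (ESd X) (ESd' X) (canon X) E B p)"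
proof (intro conjI allI impI)
  show "sset_map (ESd X) (ESd' X) (canon X)" using canon_sset_map[OF assms] .
next
  fix E :: "'e sset" and B :: "'b sset" and p
  assume fib: "inner_fibration E B p"
  show "llp (ESd X) (ESd' X) (canon X) E B p"
    unfolding llp_def
  proof (intro allI impI)
    fix u v assume a: "sset_map (ESd X) E u \<and> sset_map (ESd' X) B v \<and>
        (\<forall>n a. a \<in> sc (ESd X) n \<longrightarrow> p n (u n a) = v n (canon X n a))"
    interpret mc: mainctx X E B p u v
      using assms fib a by unfold_locales auto
    show "\<exists>w. sset_map (ESd' X) E w \<and> (\<forall>n a. a \<in> sc (ESd X) n \<longrightarrow> w n (canon X n a) = u n a) \<and>
        (\<forall>n x. x \<in> sc (ESd' X) n \<longrightarrow> p n (w n x) = v n x)"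
      using mc.lift by blast
  qed
qed

end
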